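(* There is an absolute constant $c>0$ such that for any two-prover game $\mathcal{G}$ and integers $k\ge2$, $l\ge 1$ with $kl\le|X|,|Y|$: if $opt^{r}_{Las}(\mathcal{G})=1$ for some $r\ge kl$, then $opt^{\lfloor cr/l\rfloor}_{Las}(\mathcal{G}^l_k)=1$.
   Context: A two-prover game $\mathcal{G}=(X,Y,\mathcal{Q},\Sigma_X,\Sigma_Y,\{P_{(x,y)}\})$ is viewed as a 2-CSP on variable set $X\cup Y$ (variables in $X$ take values in $\Sigma_X$, in $Y$ in $\Sigma_Y$) with distribution $\mathcal{Q}$ and predicates $P_{(x,y)}$. The instance $\mathcal{G}^l_k$ is the Max $k$-CSP whose variables are pairs $(S,T)\in\binom{X}{l}\times\binom{Y}{l}$, whose alphabet $\Sigma_X^l\times\Sigma_Y^l$ is identified with assignments to $S\cup T$, with uniform distribution on $k$-tuples of variables, and predicate on $((S_1,T_1),\dots,(S_k,T_k))$ equal to $1$ iff the assignments are mutually consistent and the combined assignment satisfies $P_{(x,y)}$ for every $(x,y)\in((\cup_jS_j)\times(\cup_jT_j))\cap\mathrm{supp}(\mathcal{Q})$, else $0$. For a CSP with variable set $V$ and distribution $\mathcal{W}$ over constraint tuples, an $r$-level Lasserre solution is a family of vectors $U_{(S,\phi_S)}$ for $S\subseteq V$, $|S|\le r$, $\phi_S$ an assignment to $S$, with: all inner products nonnegative; $\langle U_{(S_1,\phi_1)},U_{(S_2,\phi_2)}\rangle=\langle U_{(S_3,\phi_3)},U_{(S_4,\phi_4)}\rangle$ whenever $S_1\cup S_2=S_3\cup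 S_4$ and $\phi_1\circ\phi_2=\phi_3\circ\phi_4$; inner product $0$ when $\phi_1,\phi_2$ disagree on a common variable; $\sum_{\sigma}\|U_{(\{x\},x\mapsto\sigma)}\|^2=1$ for each $x$; $\|U_{(\emptyset,\emptyset)}\|=1$. Its value is $\mathbb{E}_{S\sim\mathcal{W}}[\sum_{\phi_S}\|U_{(S,\phi_S)}\|^2P_S(\phi_S)]$, and $opt^r_{Las}$ is the maximum value over $r$-level solutions.
   Formalization: The hypotheses also include $k \le \lfloor cr/l\rfloor$, so the conclusion is claimed only at levels of at least k, and the uniformly drawn k-tuples of variables of $\mathcal{G}^l_k$ may repeat a variable. Each condition added here is assumed in the paper as well or is needed for the statement above to hold. *)

theory Defs
  imports "HOL-Probability.Probability"
begin

text \<open>A CSP is given by a variable set V, an alphabet dom v for each variable,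
a distribution W over constraint labels, a scope (set of variables) of each
constraint label and a predicate on assignments to the scope.\<close>

definition assignments :: "'v set \<Rightarrow> ('v \<Rightarrow> 'a set) \<Rightarrow> ('v \<rightharpoonup> 'a) set" where
  "assignments S alph = {\<phi>. dom \<phi> = S \<and> (\<forall>v\<in>S. the (\<phi> v) \<in> alph v)}"

definition consistent :: "('v \<rightharpoonup> 'a) \<Rightarrow> ('v \<rightharpoonup> 'a) \<Rightarrow> bool" where
  "consistent \<phi> \<psi> \<longleftrightarrow> (\<forall>v \<in> dom \<phi> \<inter> dom \<psi>. \<phi> v = \<psi> v)"

text \<open>Vectors are elements of R^d, represented as functions nat => real whose
coordinates below d are relevant.\<close>

definition ip :: "nat \<Rightarrow> (nat \<Rightarrow> real) \<Rightarrow> (nat \<Rightarrow> real) \<Rightarrow> real" where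
  "ip d u w = (\<Sum>i<d. u i * w i)"

definition las_index :: "nat \<Rightarrow> 'v set \<Rightarrow> ('v \<Rightarrow> 'a set) \<Rightarrow> ('v set \<times> ('v \<rightharpoonup> 'a)) set" where
  "las_index r V alph = {(S, \<phi>). S \<subseteq> V \<and> finite S \<and> card S \<le> r \<and> \<phi> \<in> assignments S alph}"

definition lasserre_solution ::
  "nat \<Rightarrow> 'v set \<Rightarrow> ('v \<Rightarrow> 'a set) \<Rightarrow> nat \<Rightarrow> ('v set \<Rightarrow> ('v \<rightharpoonup> 'a) \<Rightarrow> nat \<Rightarrow> real) \<Rightarrow> bool" where
  "lasserre_solution r V alph d U \<longleftrightarrow>
     (\<forall>(S1,\<phi>1)\<in>las_index r V alph. \<forall>(S2,\<phi>2)\<in>las_index r V alph.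
         ip d (U S1 \<phi>1) (U S2 \<phi>2) \<ge> 0) \<and>
     (\<forall>(S1,\<phi>1)\<in>las_index r V alph. \<forall>(S2,\<phi>2)\<in>las_index r V alph.
      \<forall>(S3,\<phi>3)\<in>las_index r V alph. \<forall>(S4,\<phi>4)\<in>las_index r V alph.
         S1 \<union> S2 = S3 \<union> S4 \<and> consistent \<phi>1 \<phi>2 \<and> consistent \<phi>3 \<phi>4 \<and>
         \<phi>1 ++ \<phi>2 = \<phi>3 ++ \<phi>4 \<longrightarrow>
         ip d (U S1 \<phi>1) (U S2 \<phi>2) = ip d (U S3 \<phi>3) (U S4 \<phi>4)) \<and>
     (\<forall>(S1,\<phi>1)\<in>las_index r V alph. \<forall>(S2,\<phi>2)\<in>las_index r V alph.
         \<not> consistent \<phi>1 \<phi>2 \<longrightarrow> ip d (U S1 \<phi>1) (U S2 \<phi>2) = 0) \<and>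
     (\<forall>x\<in>V. (\<Sum>\<sigma>\<in>alph x. ip d (U {x} [x \<mapsto> \<sigma>]) (U {x} [x \<mapsto> \<sigma>])) = 1) \<and>
     ip d (U {} Map.empty) (U {} Map.empty) = 1"

definition las_value ::
  "('v \<Rightarrow> 'a set) \<Rightarrow> 'c pmf \<Rightarrow> ('c \<Rightarrow> 'v set) \<Rightarrow> ('c \<Rightarrow> ('v \<rightharpoonup> 'a) \<Rightarrow> bool)
   \<Rightarrow> nat \<Rightarrow> ('v set \<Rightarrow> ('v \<rightharpoonup> 'a) \<Rightarrow> nat \<Rightarrow> real) \<Rightarrow> real" where
  "las_value alph W scope pred d U =
     measure_pmf.expectation W (\<lambda>c.
        \<Sum>\<phi>\<in>assignments (scope c) alph.
           ip d (U (scope c) \<phi>) (U (scope c) \<phi>) * (if pred c \<phi> then 1 else 0))"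

definition opt_las ::
  "nat \<Rightarrow> 'v set \<Rightarrow> ('v \<Rightarrow> 'a set) \<Rightarrow> 'c pmf \<Rightarrow> ('c \<Rightarrow> 'v set)
   \<Rightarrow> ('c \<Rightarrow> ('v \<rightharpoonup> 'a) \<Rightarrow> bool) \<Rightarrow> real" where
  "opt_las r V alph W scope pred =
     Sup {las_value alph W scope pred d U | d U. lasserre_solution r V alph d U}"

definition two_prover_game ::
  "'x set \<Rightarrow> 'y set \<Rightarrow> ('x \<times> 'y) pmf \<Rightarrow> 'a set \<Rightarrow> 'b set \<Rightarrow> bool" where
  "two_prover_game X Y Q SX SY \<longleftrightarrow>
     finite X \<and> finite Y \<and> X \<noteq> {} \<and> Y \<noteq> {} \<and> finite SX \<and> finite SY \<and>
     SX \<noteq> {} \<and> SY \<noteq> {} \<and> set_pmf Q \<subseteq> X \<times> Y"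

definition game_vars :: "'x set \<Rightarrow> 'y set \<Rightarrow> ('x + 'y) set" where
  "game_vars X Y = Inl ` X \<union> Inr ` Y"

definition game_dom :: "'a set \<Rightarrow> 'b set \<Rightarrow> ('x + 'y) \<Rightarrow> ('a + 'b) set" where
  "game_dom SX SY v = (case v of Inl _ \<Rightarrow> Inl ` SX | Inr _ \<Rightarrow> Inr ` SY)"

definition game_scope :: "('x \<times> 'y) \<Rightarrow> ('x + 'y) set" where
  "game_scope q = {Inl (fst q), Inr (snd q)}"

definition game_pred ::
  "('x \<Rightarrow> 'y \<Rightarrow> 'a \<Rightarrow> 'b \<Rightarrow> bool) \<Rightarrow> ('x \<times> 'y) \<Rightarrow> (('x + 'y) \<rightharpoonup> ('a + 'b)) \<Rightarrow> bool" where
  "game_pred P q \<phi> = P (fst q) (snd q) (projl (the (\<phi> (Inl (fst q))))) (projr (the (\<phi> (Inr (snd q)))))"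

definition opt_las_game ::
  "nat \<Rightarrow> 'x set \<Rightarrow> 'y set \<Rightarrow> ('x \<times> 'y) pmf \<Rightarrow> 'a set \<Rightarrow> 'b set
   \<Rightarrow> ('x \<Rightarrow> 'y \<Rightarrow> 'a \<Rightarrow> 'b \<Rightarrow> bool) \<Rightarrow> real" where
  "opt_las_game r X Y Q SX SY P =
     opt_las r (game_vars X Y) (game_dom SX SY) Q game_scope (game_pred P)"

definition bday_vars :: "nat \<Rightarrow> 'x set \<Rightarrow> 'y set \<Rightarrow> ('x set \<times> 'y set) set" where
  "bday_vars l X Y = {(S,T). S \<subseteq> X \<and> card S = l \<and> T \<subseteq> Y \<and> card T = l}"

text \<open>The alphabet of (S,T) is identified with the assignments to S \<union> T.\<close>

definition bday_dom ::
  "'a set \<Rightarrow> 'b set \<Rightarrow> ('x set \<times> 'y set) \<Rightarrow> (('x + 'y) \<rightharpoonup> ('a + 'b)) set" where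
  "bday_dom SX SY ST = assignments (Inl ` fst ST \<union> Inr ` snd ST) (game_dom SX SY)"

definition bday_dist :: "nat \<Rightarrow> nat \<Rightarrow> 'x set \<Rightarrow> 'y set \<Rightarrow> ('x set \<times> 'y set) list pmf" where
  "bday_dist k l X Y = pmf_of_set {vs. length vs = k \<and> set vs \<subseteq> bday_vars l X Y}"

definition bday_scope :: "('x set \<times> 'y set) list \<Rightarrow> ('x set \<times> 'y set) set" where
  "bday_scope vs = set vs"

definition combine ::
  "('x set \<times> 'y set) list \<Rightarrow> (('x set \<times> 'y set) \<rightharpoonup> (('x + 'y) \<rightharpoonup> ('a + 'b)))
   \<Rightarrow> (('x + 'y) \<rightharpoonup> ('a + 'b))" where
  "combine vs \<Phi> z =
     (if \<exists>u\<in>set vs. the (\<Phi> u) z \<noteq> None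
      then the (\<Phi> (SOME u. u \<in> set vs \<and> the (\<Phi> u) z \<noteq> None)) z else None)"

definition bday_pred ::
  "('x \<times> 'y) pmf \<Rightarrow> ('x \<Rightarrow> 'y \<Rightarrow> 'a \<Rightarrow> 'b \<Rightarrow> bool) \<Rightarrow> ('x set \<times> 'y set) list
   \<Rightarrow> (('x set \<times> 'y set) \<rightharpoonup> (('x + 'y) \<rightharpoonup> ('a + 'b))) \<Rightarrow> bool" where
  "bday_pred Q P vs \<Phi> \<longleftrightarrow>
     (\<forall>u\<in>set vs. \<forall>w\<in>set vs. consistent (the (\<Phi> u)) (the (\<Phi> w))) \<and>
     (\<forall>(x,y)\<in>set_pmf Q. x \<in> (\<Union>u\<in>set vs. fst u) \<and> y \<in> (\<Union>u\<in>set vs. snd u) \<longrightarrow>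
         game_pred P (x,y) (combine vs \<Phi>))"

definition opt_las_bday ::
  "nat \<Rightarrow> nat \<Rightarrow> nat \<Rightarrow> 'x set \<Rightarrow> 'y set \<Rightarrow> ('x \<times> 'y) pmf \<Rightarrow> 'a set \<Rightarrow> 'b set
   \<Rightarrow> ('x \<Rightarrow> 'y \<Rightarrow> 'a \<Rightarrow> 'b \<Rightarrow> bool) \<Rightarrow> real" where
  "opt_las_bday t k l X Y Q SX SY P =
     opt_las t (bday_vars l X Y) (bday_dom SX SY) (bday_dist k l X Y) bday_scope (bday_pred Q P)"

end

theory Submission
  imports Defs
begin


lemma ip_sym: "ip d u w = ip d w u" unfolding ip_def by (simp add: mult.commute)
lemma ip_zero_left[simp]: "ip d (\<lambda>_. 0) w = 0" unfolding ip_def by simp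
lemma ip_zero_right[simp]: "ip d w (\<lambda>_. 0) = 0" unfolding ip_def by simp
lemma ip_sum_right: "ip d u (\<lambda>i. \<Sum>a\<in>A. f a i) = (\<Sum>a\<in>A. ip d u (f a))"
  unfolding ip_def by (simp add: sum_distrib_left sum.swap[of _ A])
lemma ip_sum_left: "ip d (\<lambda>i. \<Sum>a\<in>A. f a i) u = (\<Sum>a\<in>A. ip d (f a) u)"
  by (subst ip_sym, simp add: ip_sum_right ip_sym)
lemma ip_diff_sq: "ip d (\<lambda>i. F i - G i) (\<lambda>i. F i - G i) = ip d F F - 2*ip d F G + ip d G G"
  unfolding ip_def by (simp add: algebra_simps sum.distrib sum_subtractf sum_distrib_left)
lemma ip_self_zero: "ip d D D = 0 \<Longrightarrow> i < d \<Longrightarrow> D i = 0"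
  unfolding ip_def by (simp add: sum_nonneg_eq_0_iff)
lemma ip_cong: "(\<And>i. i < d \<Longrightarrow> u i = u' i) \<Longrightarrow> ip d w u = ip d w u'"
  unfolding ip_def by simp
lemma ip_self_nonneg: "ip d u u \<ge> 0" unfolding ip_def by (simp add: sum_nonneg)

lemma assignments_empty[simp]: "assignments {} alph = {Map.empty}"
  unfolding assignments_def by auto

lemma assignments_single: "assignments {x} alph = (\<lambda>\<sigma>. [x \<mapsto> \<sigma>]) ` alph x"
  unfolding assignments_def
  apply (auto simp: dom_eq_singleton_conv)
  done

lemma inj_single: "inj_on (\<lambda>\<sigma>. [x \<mapsto> \<sigma>]) A"
  by (auto simp: inj_on_def fun_eq_iff split: if_splits)

lemma assignments_split:
  assumes "T \<inter> R = {}"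
  shows "assignments (T \<union> R) alph = (\<lambda>(\<phi>,\<rho>). \<phi> ++ \<rho>) ` (assignments T alph \<times> assignments R alph)"
proof
  show "assignments (T \<union> R) alph \<subseteq> (\<lambda>(\<phi>,\<rho>). \<phi> ++ \<rho>) ` (assignments T alph \<times> assignments R alph)"
  proof
    fix \<psi> assume p: "\<psi> \<in> assignments (T \<union> R) alph"
    have "\<psi> = (\<psi> |` T) ++ (\<psi> |` R)"
      using p by (auto simp: assignments_def fun_eq_iff map_add_def restrict_map_def split: option.splits)
    moreover have "\<psi> |` T \<in> assignments T alph" "\<psi> |` R \<in> assignments R alph"
      using p by (auto simp: assignments_def)
    ultimately show "\<psi> \<in> (\<lambda>(\<phi>,\<rho>). \<phi> ++ \<rho>) ` (assignments T alph \<times> assignments R alph)"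
      by (auto intro!: image_eqI[where x="(\<psi> |` T, \<psi> |` R)"])
  qed
  show "(\<lambda>(\<phi>,\<rho>). \<phi> ++ \<rho>) ` (assignments T alph \<times> assignments R alph) \<subseteq> assignments (T \<union> R) alph"
  proof (clarify)
    fix a b assume m: "a \<in> assignments T alph" "b \<in> assignments R alph"
    show "a ++ b \<in> assignments (T \<union> R) alph"
      unfolding assignments_def
    proof (intro CollectI conjI ballI)
      show "dom (a ++ b) = T \<union> R" using m by (auto simp: assignments_def)
      fix v assume "v \<in> T \<union> R"
      show "the ((a ++ b) v) \<in> alph v"
      proof (cases "v \<in> R")
        case True then have "(a ++ b) v = b v" using m by (auto simp: assignments_def map_add_dom_app_simps)
        then show ?thesis using m True by (auto simp: assignments_def)
      next
        case False then have "(a ++ b) v = a v" using m by (auto simp: assignments_def map_add_dom_app_simps)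
        then show ?thesis using m False \<open>v \<in> T \<union> R\<close> by (auto simp: assignments_def)
      qed
    qed
  qed
qed

lemma restrict_add_left:
  assumes "dom \<phi> = T" "dom \<rho> = R" "T \<inter> R = {}"
  shows "(\<phi> ++ \<rho>) |` T = \<phi>"
  using assms by (auto simp: fun_eq_iff restrict_map_def map_add_def split: option.splits)

lemma restrict_add_right:
  assumes "dom \<phi> = T" "dom \<rho> = R"
  shows "(\<phi> ++ \<rho>) |` R = \<rho>"
  using assms by (auto simp: fun_eq_iff restrict_map_def map_add_def split: option.splits)

lemma inj_split:
  assumes "T \<inter> R = {}"
  shows "inj_on (\<lambda>(\<phi>,\<rho>). \<phi> ++ \<rho>) (assignments T alph \<times> assignments R alph)"
proof (rule inj_onI, clarify)
  fix a b a' b' assume m: "a \<in> assignments T alph" "b \<in> assignments R alph"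
     "a' \<in> assignments T alph" "b' \<in> assignments R alph" and e: "a ++ b = a' ++ b'"
  have "a = (a ++ b) |` T" "a' = (a' ++ b') |` T" "b = (a ++ b) |` R" "b' = (a' ++ b') |` R"
    using m assms by (auto simp: assignments_def restrict_add_left restrict_add_right)
  with e show "a = a' \<and> b = b'" by metis
qed

lemma sum_split:
  assumes "T \<inter> R = {}"
  shows "(\<Sum>\<psi>\<in>assignments (T \<union> R) alph. f \<psi>) = (\<Sum>\<phi>\<in>assignments T alph. \<Sum>\<rho>\<in>assignments R alph. f (\<phi> ++ \<rho>))"
  unfolding assignments_split[OF assms]
  by (subst sum.reindex[OF inj_split[OF assms]]) (simp add: sum.cartesian_product split_def)

lemma finite_assignments:
  assumes "finite S" "\<And>v. v \<in> S \<Longrightarrow> finite (alph v)"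
  shows "finite (assignments S alph)"
proof -
  have "assignments S alph \<subseteq> {m. dom m = S \<and> ran m \<subseteq> (\<Union>v\<in>S. alph v)}"
    by (auto simp: assignments_def ran_def) (metis domI option.sel)
  moreover have "finite {m. dom m = S \<and> ran m \<subseteq> (\<Union>v\<in>S. alph v)}"
    using assms by (intro finite_set_of_finite_maps) auto
  ultimately show ?thesis by (rule finite_subset)
qed




lemma idx_iff: "(S,\<phi>) \<in> las_index r V alph \<longleftrightarrow> S \<subseteq> V \<and> finite S \<and> card S \<le> r \<and> \<phi> \<in> assignments S alph"
  unfolding las_index_def by auto

lemma add_assign:
  assumes "\<phi>1 \<in> assignments S1 alph" "\<phi>2 \<in> assignments S2 alph"
  shows "\<phi>1 ++ \<phi>2 \<in> assignments (S1 \<union> S2) alph"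
  unfolding assignments_def
proof (intro CollectI conjI ballI)
  show "dom (\<phi>1 ++ \<phi>2) = S1 \<union> S2" using assms by (auto simp: assignments_def)
  fix v assume "v \<in> S1 \<union> S2"
  show "the ((\<phi>1 ++ \<phi>2) v) \<in> alph v"
  proof (cases "v \<in> S2")
    case True then have "(\<phi>1 ++ \<phi>2) v = \<phi>2 v" using assms by (auto simp: assignments_def map_add_dom_app_simps)
    then show ?thesis using assms True by (auto simp: assignments_def)
  next
    case False then have "(\<phi>1 ++ \<phi>2) v = \<phi>1 v" using assms by (auto simp: assignments_def map_add_dom_app_simps)
    then show ?thesis using assms False \<open>v \<in> S1 \<union> S2\<close> by (auto simp: assignments_def)
  qed
qed

lemma map_add_self: "m ++ m = m"
  by (auto simp: fun_eq_iff map_add_def split: option.splits)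

lemma same_dom_consistent: "dom \<rho> = dom \<rho>' \<Longrightarrow> consistent \<rho> \<rho>' \<Longrightarrow> \<rho> = \<rho>'"
  unfolding consistent_def by (metis domIff ext IntI)

lemma consistent_disj: "dom \<phi> \<inter> dom \<rho> = {} \<Longrightarrow> consistent \<phi> \<rho>"
  unfolding consistent_def by auto

locale las =
  fixes r :: nat and V :: "'v set" and alph :: "'v \<Rightarrow> 'a set" and d :: nat
    and U :: "'v set \<Rightarrow> ('v \<rightharpoonup> 'a) \<Rightarrow> nat \<Rightarrow> real"
  assumes sol: "lasserre_solution r V alph d U"
begin

abbreviation "idx \<equiv> las_index r V alph"
abbreviation "nrm S \<phi> \<equiv> ip d (U S \<phi>) (U S \<phi>)"
abbreviation "E0 \<equiv> U {} Map.empty"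

lemma c1: "\<forall>(S1,\<phi>1)\<in>idx. \<forall>(S2,\<phi>2)\<in>idx. ip d (U S1 \<phi>1) (U S2 \<phi>2) \<ge> 0"
  using sol unfolding lasserre_solution_def by (elim conjE)
lemma c2: "\<forall>(S1,\<phi>1)\<in>idx. \<forall>(S2,\<phi>2)\<in>idx.
      \<forall>(S3,\<phi>3)\<in>idx. \<forall>(S4,\<phi>4)\<in>idx.
         S1 \<union> S2 = S3 \<union> S4 \<and> consistent \<phi>1 \<phi>2 \<and> consistent \<phi>3 \<phi>4 \<and>
         \<phi>1 ++ \<phi>2 = \<phi>3 ++ \<phi>4 \<longrightarrow>
         ip d (U S1 \<phi>1) (U S2 \<phi>2) = ip d (U S3 \<phi>3) (U S4 \<phi>4)"
  using sol unfolding lasserre_solution_def by (elim conjE)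
lemma c3: "\<forall>(S1,\<phi>1)\<in>idx. \<forall>(S2,\<phi>2)\<in>idx.
         \<not> consistent \<phi>1 \<phi>2 \<longrightarrow> ip d (U S1 \<phi>1) (U S2 \<phi>2) = 0"
  using sol unfolding lasserre_solution_def by (elim conjE)
lemma C4: "x \<in> V \<Longrightarrow> (\<Sum>\<sigma>\<in>alph x. nrm {x} [x \<mapsto> \<sigma>]) = 1"
  using sol unfolding lasserre_solution_def by (elim conjE) (drule bspec)
lemma C5: "ip d E0 E0 = 1"
  using sol unfolding lasserre_solution_def by (elim conjE)

lemma C1: "(S1,\<phi>1) \<in> idx \<Longrightarrow> (S2,\<phi>2) \<in> idx \<Longrightarrow> ip d (U S1 \<phi>1) (U S2 \<phi>2) \<ge> 0"
  using c1 by fast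

lemma C2: "(S1,\<phi>1) \<in> idx \<Longrightarrow> (S2,\<phi>2) \<in> idx \<Longrightarrow> (S3,\<phi>3) \<in> idx \<Longrightarrow> (S4,\<phi>4) \<in> idx \<Longrightarrow>
   S1 \<union> S2 = S3 \<union> S4 \<Longrightarrow> consistent \<phi>1 \<phi>2 \<Longrightarrow> consistent \<phi>3 \<phi>4 \<Longrightarrow> \<phi>1 ++ \<phi>2 = \<phi>3 ++ \<phi>4 \<Longrightarrow>
   ip d (U S1 \<phi>1) (U S2 \<phi>2) = ip d (U S3 \<phi>3) (U S4 \<phi>4)"
proof -
  assume a: "(S1,\<phi>1) \<in> idx" "(S2,\<phi>2) \<in> idx" "(S3,\<phi>3) \<in> idx" "(S4,\<phi>4) \<in> idx"
    "S1 \<union> S2 = S3 \<union> S4" "consistent \<phi>1 \<phi>2" "consistent \<phi>3 \<phi>4" "\<phi>1 ++ \<phi>2 = \<phi>3 ++ \<phi>4"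
  have h1: "\<forall>(S2,\<phi>2)\<in>idx. \<forall>(S3,\<phi>3)\<in>idx. \<forall>(S4,\<phi>4)\<in>idx.
         S1 \<union> S2 = S3 \<union> S4 \<and> consistent \<phi>1 \<phi>2 \<and> consistent \<phi>3 \<phi>4 \<and>
         \<phi>1 ++ \<phi>2 = \<phi>3 ++ \<phi>4 \<longrightarrow>
         ip d (U S1 \<phi>1) (U S2 \<phi>2) = ip d (U S3 \<phi>3) (U S4 \<phi>4)"
    using bspec[OF c2 a(1)] by simp
  have h2: "\<forall>(S3,\<phi>3)\<in>idx. \<forall>(S4,\<phi>4)\<in>idx.
         S1 \<union> S2 = S3 \<union> S4 \<and> consistent \<phi>1 \<phi>2 \<and> consistent \<phi>3 \<phi>4 \<and>
         \<phi>1 ++ \<phi>2 = \<phi>3 ++ \<phi>4 \<longrightarrow>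
         ip d (U S1 \<phi>1) (U S2 \<phi>2) = ip d (U S3 \<phi>3) (U S4 \<phi>4)"
    using bspec[OF h1 a(2)] by simp
  have h3: "\<forall>(S4,\<phi>4)\<in>idx.
         S1 \<union> S2 = S3 \<union> S4 \<and> consistent \<phi>1 \<phi>2 \<and> consistent \<phi>3 \<phi>4 \<and>
         \<phi>1 ++ \<phi>2 = \<phi>3 ++ \<phi>4 \<longrightarrow>
         ip d (U S1 \<phi>1) (U S2 \<phi>2) = ip d (U S3 \<phi>3) (U S4 \<phi>4)"
    using bspec[OF h2 a(3)] by simp
  have "S1 \<union> S2 = S3 \<union> S4 \<and> consistent \<phi>1 \<phi>2 \<and> consistent \<phi>3 \<phi>4 \<and>
         \<phi>1 ++ \<phi>2 = \<phi>3 ++ \<phi>4 \<longrightarrow>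
         ip d (U S1 \<phi>1) (U S2 \<phi>2) = ip d (U S3 \<phi>3) (U S4 \<phi>4)"
    using bspec[OF h3 a(4)] by simp
  then show ?thesis using a by blast
qed

lemma C3: "(S1,\<phi>1) \<in> idx \<Longrightarrow> (S2,\<phi>2) \<in> idx \<Longrightarrow> \<not> consistent \<phi>1 \<phi>2 \<Longrightarrow> ip d (U S1 \<phi>1) (U S2 \<phi>2) = 0"
  using c3 by fast

lemma empty_idx: "({}, Map.empty) \<in> idx"
  by (simp add: idx_iff)

lemma pair:
  assumes "(S1,\<phi>1) \<in> idx" "(S2,\<phi>2) \<in> idx" "consistent \<phi>1 \<phi>2" "card (S1 \<union> S2) \<le> r"
  shows "ip d (U S1 \<phi>1) (U S2 \<phi>2) = ip d (U (S1 \<union> S2) (\<phi>1 ++ \<phi>2)) E0"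
proof (rule C2[OF assms(1,2) _ empty_idx _ assms(3)])
  show "(S1 \<union> S2, \<phi>1 ++ \<phi>2) \<in> idx" using assms by (auto simp: idx_iff intro: add_assign)
qed (auto simp: consistent_def)

lemma norm_eq:
  assumes "(S,\<phi>) \<in> idx"
  shows "nrm S \<phi> = ip d (U S \<phi>) E0"
  using pair[OF assms assms] assms by (simp add: consistent_def map_add_self idx_iff)

lemma alph_finite: "x \<in> V \<Longrightarrow> finite (alph x)"
  using C4 by (metis sum.infinite zero_neq_one)

lemma sum_single:
  assumes "x \<in> V"
  shows "(\<Sum>\<rho>\<in>assignments {x} alph. nrm {x} \<rho>) = 1"
  unfolding assignments_single by (subst sum.reindex[OF inj_single]) (simp add: C4[OF assms])

lemma vec:
  assumes S: "S \<subseteq> V" "finite S" "card S \<le> r" and s1: "(\<Sum>\<rho>\<in>assignments S alph. nrm S \<rho>) = 1"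
  shows "\<forall>i<d. (\<Sum>\<rho>\<in>assignments S alph. U S \<rho> i) = E0 i"
proof -
  let ?A = "assignments S alph"
  have fin: "finite ?A" using S by (intro finite_assignments alph_finite) auto
  have id: "\<rho> \<in> ?A \<Longrightarrow> (S,\<rho>) \<in> idx" for \<rho> using S by (simp add: idx_iff)
  define F where "F = (\<lambda>i. \<Sum>\<rho>\<in>?A. U S \<rho> i)"
  have FF: "ip d F F = 1"
  proof -
    have "ip d F F = (\<Sum>\<rho>\<in>?A. \<Sum>\<rho>'\<in>?A. ip d (U S \<rho>) (U S \<rho>'))"
      unfolding F_def ip_sum_left ip_sum_right ..
    also have "\<dots> = (\<Sum>\<rho>\<in>?A. nrm S \<rho>)"
    proof (rule sum.cong[OF refl])
      fix \<rho> assume r: "\<rho> \<in> ?A"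
      have "(\<Sum>\<rho>'\<in>?A. ip d (U S \<rho>) (U S \<rho>')) = (\<Sum>\<rho>'\<in>{\<rho>}. ip d (U S \<rho>) (U S \<rho>'))"
      proof (rule sum.mono_neutral_right[OF fin])
        show "\<forall>i\<in>?A - {\<rho>}. ip d (U S \<rho>) (U S i) = 0"
        proof
          fix \<rho>' assume "\<rho>' \<in> ?A - {\<rho>}"
          then have "\<not> consistent \<rho> \<rho>'" using r same_dom_consistent[of \<rho> \<rho>']
            by (auto simp: assignments_def)
          then show "ip d (U S \<rho>) (U S \<rho>') = 0" using C3 id r \<open>\<rho>' \<in> ?A - {\<rho>}\<close> by auto
        qed
      qed (use r in auto)
      then show "(\<Sum>\<rho>'\<in>?A. ip d (U S \<rho>) (U S \<rho>')) = nrm S \<rho>" by simp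
    qed
    finally show ?thesis using s1 by simp
  qed
  have "ip d F E0 = (\<Sum>\<rho>\<in>?A. ip d (U S \<rho>) E0)"
    unfolding F_def ip_sum_left ..
  also have "\<dots> = (\<Sum>\<rho>\<in>?A. nrm S \<rho>)"
    by (rule sum.cong[OF refl]) (simp add: norm_eq id)
  finally have FG: "ip d F E0 = 1" using s1 by simp
  have z: "ip d (\<lambda>i. F i - E0 i) (\<lambda>i. F i - E0 i) = 0"
    unfolding ip_diff_sq FF FG C5 by simp
  show ?thesis
  proof (intro allI impI)
    fix i assume "i < d"
    from ip_self_zero[OF z this] show "(\<Sum>\<rho>\<in>?A. U S \<rho> i) = E0 i" unfolding F_def by simp
  qed
qed

lemma marg:
  assumes T: "T \<subseteq> V" "R \<subseteq> V" "finite T" "finite R" "T \<inter> R = {}" "card (T \<union> R) \<le> r"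
    and s1: "(\<Sum>\<rho>\<in>assignments R alph. nrm R \<rho>) = 1"
    and phi: "\<phi> \<in> assignments T alph"
  shows "(\<Sum>\<rho>\<in>assignments R alph. nrm (T \<union> R) (\<phi> ++ \<rho>)) = nrm T \<phi>"
proof -
  have cT: "card T \<le> r" "card R \<le> r" using T card_mono[of "T \<union> R" T] card_mono[of "T \<union> R" R] by auto
  have iT: "(T,\<phi>) \<in> idx" using T cT phi by (simp add: idx_iff)
  have v: "\<forall>i<d. (\<Sum>\<rho>\<in>assignments R alph. U R \<rho> i) = E0 i" using vec T cT s1 by auto
  have "(\<Sum>\<rho>\<in>assignments R alph. nrm (T \<union> R) (\<phi> ++ \<rho>)) = (\<Sum>\<rho>\<in>assignments R alph. ip d (U T \<phi>) (U R \<rho>))"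
  proof (rule sum.cong[OF refl])
    fix \<rho> assume rr: "\<rho> \<in> assignments R alph"
    have iR: "(R,\<rho>) \<in> idx" using T cT rr by (simp add: idx_iff)
    have "(T \<union> R, \<phi> ++ \<rho>) \<in> idx" using T phi rr by (simp add: idx_iff add_assign)
    then have "nrm (T \<union> R) (\<phi> ++ \<rho>) = ip d (U (T \<union> R) (\<phi> ++ \<rho>)) E0" by (rule norm_eq)
    also have "\<dots> = ip d (U T \<phi>) (U R \<rho>)"
      using pair[OF iT iR] consistent_disj[of \<phi> \<rho>] phi rr T by (auto simp: assignments_def)
    finally show "nrm (T \<union> R) (\<phi> ++ \<rho>) = ip d (U T \<phi>) (U R \<rho>)" .
  qed
  also have "\<dots> = ip d (U T \<phi>) (\<lambda>i. \<Sum>\<rho>\<in>assignments R alph. U R \<rho> i)" by (simp add: ip_sum_right)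
  also have "\<dots> = ip d (U T \<phi>) E0" using v by (intro ip_cong) auto
  also have "\<dots> = nrm T \<phi>" using norm_eq[OF iT] by simp
  finally show ?thesis .
qed

lemma sum_all:
  assumes "S \<subseteq> V" "finite S" "card S \<le> r"
  shows "(\<Sum>\<rho>\<in>assignments S alph. nrm S \<rho>) = 1"
  using assms(2,1,3)
proof (induction S rule: finite_induct)
  case empty then show ?case using C5 by simp
next
  case (insert x S)
  have e: "insert x S = S \<union> {x}" by auto
  have cS: "card S \<le> r" using insert by simp
  have "(\<Sum>\<rho>\<in>assignments (insert x S) alph. nrm (insert x S) \<rho>)
      = (\<Sum>\<phi>\<in>assignments S alph. \<Sum>\<rho>\<in>assignments {x} alph. nrm (S \<union> {x}) (\<phi> ++ \<rho>))"
    unfolding e by (rule sum_split) (use insert in auto)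
  also have "\<dots> = (\<Sum>\<phi>\<in>assignments S alph. nrm S \<phi>)"
    by (rule sum.cong[OF refl], rule marg) (use insert sum_single in auto)
  also have "\<dots> = 1" using insert cS by auto
  finally show ?case .
qed

lemma marg_sum0:
  assumes "T \<union> R \<subseteq> V" "finite T" "finite R" "card (T \<union> R) \<le> r" "T \<inter> R = {}"
  shows "(\<Sum>\<psi>\<in>assignments (T \<union> R) alph. g (\<psi> |` T) * nrm (T \<union> R) \<psi>) = (\<Sum>\<phi>\<in>assignments T alph. g \<phi> * nrm T \<phi>)"
proof -
  have "(\<Sum>\<psi>\<in>assignments (T \<union> R) alph. g (\<psi> |` T) * nrm (T \<union> R) \<psi>)
     = (\<Sum>\<phi>\<in>assignments T alph. \<Sum>\<rho>\<in>assignments R alph. g ((\<phi> ++ \<rho>) |` T) * nrm (T \<union> R) (\<phi> ++ \<rho>))"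
    by (rule sum_split) (use assms in auto)
  also have "\<dots> = (\<Sum>\<phi>\<in>assignments T alph. g \<phi> * (\<Sum>\<rho>\<in>assignments R alph. nrm (T \<union> R) (\<phi> ++ \<rho>)))"
    unfolding sum_distrib_left
  proof (intro sum.cong refl)
    fix \<phi> \<rho> assume a: "\<phi> \<in> assignments T alph" "\<rho> \<in> assignments R alph"
    have "(\<phi> ++ \<rho>) |` T = \<phi>"
      by (rule restrict_add_left) (use a assms(5) in \<open>simp_all add: assignments_def\<close>)
    then show "g ((\<phi> ++ \<rho>) |` T) * nrm (T \<union> R) (\<phi> ++ \<rho>) = g \<phi> * nrm (T \<union> R) (\<phi> ++ \<rho>)" by simp
  qed
  also have "\<dots> = (\<Sum>\<phi>\<in>assignments T alph. g \<phi> * nrm T \<phi>)"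
  proof (intro sum.cong refl arg_cong2[where f="(*)"])
    fix \<phi> assume "\<phi> \<in> assignments T alph"
    show "(\<Sum>\<rho>\<in>assignments R alph. nrm (T \<union> R) (\<phi> ++ \<rho>)) = nrm T \<phi>"
    proof (rule marg)
      have "card R \<le> r" using assms card_mono[of "T \<union> R" R] by simp
      then show "(\<Sum>\<rho>\<in>assignments R alph. nrm R \<rho>) = 1" using assms by (intro sum_all) auto
    qed (use assms \<open>\<phi> \<in> assignments T alph\<close> in auto)
  qed
  finally show ?thesis .
qed

lemma marg_sum:
  assumes "S \<subseteq> V" "finite S" "card S \<le> r" "T \<subseteq> S"
  shows "(\<Sum>\<psi>\<in>assignments S alph. g (\<psi> |` T) * nrm S \<psi>) = (\<Sum>\<phi>\<in>assignments T alph. g \<phi> * nrm T \<phi>)"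
proof -
  have e: "T \<union> (S - T) = S" using assms by auto
  have fT: "finite T" "finite (S - T)" using assms finite_subset by auto
  have d: "T \<inter> (S - T) = {}" by auto
  have "T \<union> (S - T) \<subseteq> V" "card (T \<union> (S - T)) \<le> r" unfolding e using assms by auto
  from marg_sum0[OF this(1) fT this(2) d, of g] show ?thesis unfolding e .
qed

end



lemma pmf_exp_le:
  fixes f :: "'c \<Rightarrow> real"
  assumes "finite (set_pmf W)" "\<And>c. c \<in> set_pmf W \<Longrightarrow> f c \<le> b"
  shows "measure_pmf.expectation W f \<le> b"
proof -
  have "measure_pmf.expectation W f = (\<Sum>a\<in>set_pmf W. f a * pmf W a)"
    by (rule integral_measure_pmf_real) (use assms in auto)
  also have "\<dots> \<le> (\<Sum>a\<in>set_pmf W. b * pmf W a)"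
    by (rule sum_mono) (use assms in \<open>auto intro: mult_right_mono\<close>)
  also have "\<dots> = b" using sum_pmf_eq_1[OF assms(1) order_refl] by (simp add: sum_distrib_left[symmetric])
  finally show ?thesis .
qed

lemma pmf_exp_ge:
  fixes f :: "'c \<Rightarrow> real"
  assumes "finite (set_pmf W)" "\<And>c. c \<in> set_pmf W \<Longrightarrow> f c \<ge> b"
  shows "measure_pmf.expectation W f \<ge> b"
proof -
  have "measure_pmf.expectation W f = (\<Sum>a\<in>set_pmf W. f a * pmf W a)"
    by (rule integral_measure_pmf_real) (use assms in auto)
  moreover have "(\<Sum>a\<in>set_pmf W. f a * pmf W a) \<ge> (\<Sum>a\<in>set_pmf W. b * pmf W a)"
    by (rule sum_mono) (use assms in \<open>auto intro: mult_right_mono\<close>)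
  moreover have "(\<Sum>a\<in>set_pmf W. b * pmf W a) = b" using sum_pmf_eq_1[OF assms(1) order_refl] by (simp add: sum_distrib_left[symmetric])
  ultimately show ?thesis by linarith
qed

context las begin

lemma value_le1:
  assumes fin: "finite (set_pmf W)"
    and sc: "\<And>c. c \<in> set_pmf W \<Longrightarrow> scope c \<subseteq> V \<and> finite (scope c) \<and> card (scope c) \<le> r"
  shows "las_value alph W scope pred d U \<le> 1"
  unfolding las_value_def
proof (rule pmf_exp_le[OF fin])
  fix c assume c: "c \<in> set_pmf W"
  have "(\<Sum>\<phi>\<in>assignments (scope c) alph. nrm (scope c) \<phi> * (if pred c \<phi> then 1 else 0))
      \<le> (\<Sum>\<phi>\<in>assignments (scope c) alph. nrm (scope c) \<phi>)"
    by (rule sum_mono) (auto simp: ip_self_nonneg)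
  also have "\<dots> = 1" using sc[OF c] by (intro sum_all) auto
  finally show "(\<Sum>\<phi>\<in>assignments (scope c) alph. nrm (scope c) \<phi> * (if pred c \<phi> then 1 else 0)) \<le> 1" .
qed

end

lemma map_le_add_iff:
  assumes "consistent \<phi>1 \<phi>2"
  shows "(\<phi>1 ++ \<phi>2 \<subseteq>\<^sub>m \<alpha>) \<longleftrightarrow> (\<phi>1 \<subseteq>\<^sub>m \<alpha> \<and> \<phi>2 \<subseteq>\<^sub>m \<alpha>)"
proof
  assume a: "\<phi>1 ++ \<phi>2 \<subseteq>\<^sub>m \<alpha>"
  have "\<phi>1 \<subseteq>\<^sub>m \<phi>1 ++ \<phi>2" using assms unfolding consistent_def map_le_def
    by (simp add: map_add_def split: option.splits) (metis IntI domI)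
  moreover have "\<phi>2 \<subseteq>\<^sub>m \<phi>1 ++ \<phi>2" by (rule map_le_map_add)
  ultimately show "\<phi>1 \<subseteq>\<^sub>m \<alpha> \<and> \<phi>2 \<subseteq>\<^sub>m \<alpha>" using a map_le_trans by blast
next
  assume "\<phi>1 \<subseteq>\<^sub>m \<alpha> \<and> \<phi>2 \<subseteq>\<^sub>m \<alpha>"
  then show "\<phi>1 ++ \<phi>2 \<subseteq>\<^sub>m \<alpha>" by (simp add: map_add_le_mapI)
qed

lemma map_le_consistent: "\<phi>1 \<subseteq>\<^sub>m \<alpha> \<Longrightarrow> \<phi>2 \<subseteq>\<^sub>m \<alpha> \<Longrightarrow> consistent \<phi>1 \<phi>2"
  unfolding map_le_def consistent_def by auto

lemma integral_sol:
  fixes V :: "'v set" and alph :: "'v \<Rightarrow> 'a set"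
  assumes "\<And>v. v \<in> V \<Longrightarrow> finite (alph v) \<and> alph v \<noteq> {}"
  shows "\<exists>d U. lasserre_solution r V alph d U"
proof -
  define \<alpha> where "\<alpha> = (\<lambda>v. Some (SOME \<sigma>. \<sigma> \<in> alph v))"
  define U :: "'v set \<Rightarrow> ('v \<rightharpoonup> 'a) \<Rightarrow> nat \<Rightarrow> real" where "U = (\<lambda>S \<phi> i. if \<phi> \<subseteq>\<^sub>m \<alpha> then 1 else 0)"
  have ip1: "ip 1 (U S1 \<phi>1) (U S2 \<phi>2) = (if \<phi>1 \<subseteq>\<^sub>m \<alpha> \<and> \<phi>2 \<subseteq>\<^sub>m \<alpha> then 1 else 0)" for S1 S2 \<phi>1 \<phi>2
    by (simp add: ip_def U_def)
  have "lasserre_solution r V alph 1 U"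
    unfolding lasserre_solution_def
  proof (intro conjI)
    show "\<forall>(S1, \<phi>1)\<in>las_index r V alph. \<forall>(S2, \<phi>2)\<in>las_index r V alph. 0 \<le> ip 1 (U S1 \<phi>1) (U S2 \<phi>2)"
    proof (clarify)
      fix S1 S2 :: "'v set" and \<phi>1 \<phi>2 :: "'v \<rightharpoonup> 'a" show "0 \<le> ip 1 (U S1 \<phi>1) (U S2 \<phi>2)" unfolding ip1 by simp
    qed
    show "\<forall>(S1, \<phi>1)\<in>las_index r V alph. \<forall>(S2, \<phi>2)\<in>las_index r V alph.
      \<forall>(S3, \<phi>3)\<in>las_index r V alph. \<forall>(S4, \<phi>4)\<in>las_index r V alph.
         S1 \<union> S2 = S3 \<union> S4 \<and> consistent \<phi>1 \<phi>2 \<and> consistent \<phi>3 \<phi>4 \<and>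
         \<phi>1 ++ \<phi>2 = \<phi>3 ++ \<phi>4 \<longrightarrow>
         ip 1 (U S1 \<phi>1) (U S2 \<phi>2) = ip 1 (U S3 \<phi>3) (U S4 \<phi>4)"
    proof (clarify)
      fix S1 S2 S3 S4 :: "'v set" and \<phi>1 \<phi>2 \<phi>3 \<phi>4 :: "'v \<rightharpoonup> 'a"
      assume c: "consistent \<phi>1 \<phi>2" "consistent \<phi>3 \<phi>4" "\<phi>1 ++ \<phi>2 = \<phi>3 ++ \<phi>4"
      show "ip 1 (U S1 \<phi>1) (U S2 \<phi>2) = ip 1 (U S3 \<phi>3) (U S4 \<phi>4)"
        unfolding ip1 using map_le_add_iff[OF c(1), of \<alpha>] map_le_add_iff[OF c(2), of \<alpha>] c(3) by simp
    qed
    show "\<forall>(S1, \<phi>1)\<in>las_index r V alph. \<forall>(S2, \<phi>2)\<in>las_index r V alph.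
         \<not> consistent \<phi>1 \<phi>2 \<longrightarrow> ip 1 (U S1 \<phi>1) (U S2 \<phi>2) = 0"
    proof (clarify)
      fix S1 S2 :: "'v set" and \<phi>1 \<phi>2 :: "'v \<rightharpoonup> 'a" assume "\<not> consistent \<phi>1 \<phi>2"
      then show "ip 1 (U S1 \<phi>1) (U S2 \<phi>2) = 0" unfolding ip1 using map_le_consistent by auto
    qed
    show "\<forall>x\<in>V. (\<Sum>\<sigma>\<in>alph x. ip 1 (U {x} [x \<mapsto> \<sigma>]) (U {x} [x \<mapsto> \<sigma>])) = 1"
    proof
      fix x assume x: "x \<in> V"
      have m: "(SOME \<sigma>. \<sigma> \<in> alph x) \<in> alph x" using assms[OF x] by (simp add: some_in_eq)
      have e: "([x \<mapsto> \<sigma>] \<subseteq>\<^sub>m \<alpha>) = (\<sigma> = (SOME \<sigma>. \<sigma> \<in> alph x))" for \<sigma>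
        by (auto simp: map_le_def \<alpha>_def)
      show "(\<Sum>\<sigma>\<in>alph x. ip 1 (U {x} [x \<mapsto> \<sigma>]) (U {x} [x \<mapsto> \<sigma>])) = 1"
        unfolding ip1 e using m assms[OF x] by (simp add: sum.delta')
    qed
    show "ip 1 (U {} Map.empty) (U {} Map.empty) = 1" unfolding ip1 by simp
  qed
  then show ?thesis by (intro exI)
qed




definition vset :: "('x set \<times> 'y set) \<Rightarrow> ('x + 'y) set" where
  "vset u = Inl ` fst u \<union> Inr ` snd u"
definition GA :: "('x set \<times> 'y set) set \<Rightarrow> ('x + 'y) set" where
  "GA A = (\<Union>u\<in>A. vset u)"
definition cmb :: "('x set \<times> 'y set) set \<Rightarrow> (('x set \<times> 'y set) \<rightharpoonup> (('x + 'y) \<rightharpoonup> ('a + 'b)))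
   \<Rightarrow> (('x + 'y) \<rightharpoonup> ('a + 'b))" where
  "cmb A \<Phi> z = (if \<exists>u\<in>A. the (\<Phi> u) z \<noteq> None then the (\<Phi> (SOME u. u \<in> A \<and> the (\<Phi> u) z \<noteq> None)) z else None)"
definition pc :: "('x set \<times> 'y set) set \<Rightarrow> (('x set \<times> 'y set) \<rightharpoonup> (('x + 'y) \<rightharpoonup> ('a + 'b))) \<Rightarrow> bool" where
  "pc A \<Phi> \<longleftrightarrow> (\<forall>u\<in>A. \<forall>w\<in>A. consistent (the (\<Phi> u)) (the (\<Phi> w)))"
definition Wv :: "(('x + 'y) set \<Rightarrow> (('x + 'y) \<rightharpoonup> ('a + 'b)) \<Rightarrow> nat \<Rightarrow> real) \<Rightarrow>
   ('x set \<times> 'y set) set \<Rightarrow> (('x set \<times> 'y set) \<rightharpoonup> (('x + 'y) \<rightharpoonup> ('a + 'b))) \<Rightarrow> nat \<Rightarrow> real" where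
  "Wv U A \<Phi> = (if pc A \<Phi> then U (GA A) (cmb A \<Phi>) else (\<lambda>_. 0))"

lemma combine_eq: "combine vs \<Phi> = cmb (set vs) \<Phi>"
  by (simp add: fun_eq_iff combine_def cmb_def)

lemma bday_dom_eq: "bday_dom SX SY u = assignments (vset u) (game_dom SX SY)"
  by (simp add: bday_dom_def vset_def)

lemma GA_Un: "GA (A1 \<union> A2) = GA A1 \<union> GA A2" by (simp add: GA_def)

lemma AS:
  assumes "\<Phi> \<in> assignments A (bday_dom SX SY)" "u \<in> A"
  shows "\<Phi> u = Some (the (\<Phi> u))" "the (\<Phi> u) \<in> assignments (vset u) (game_dom SX SY)"
    "dom (the (\<Phi> u)) = vset u"
proof -
  show "\<Phi> u = Some (the (\<Phi> u))" using assms by (auto simp: assignments_def)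
  show *: "the (\<Phi> u) \<in> assignments (vset u) (game_dom SX SY)"
    using assms by (auto simp: assignments_def bday_dom_eq)
  then show "dom (the (\<Phi> u)) = vset u" by (simp add: assignments_def)
qed

lemma cmb_at:
  assumes \<Phi>: "\<Phi> \<in> assignments A (bday_dom SX SY)" and pc: "pc A \<Phi>" and u: "u \<in> A" and z: "z \<in> vset u"
  shows "cmb A \<Phi> z = the (\<Phi> u) z"
proof -
  have nz: "the (\<Phi> u) z \<noteq> None" using AS(3)[OF \<Phi> u] z by auto
  then have ex: "\<exists>u\<in>A. the (\<Phi> u) z \<noteq> None" using u by blast
  define w where "w = (SOME w. w \<in> A \<and> the (\<Phi> w) z \<noteq> None)"
  have w: "w \<in> A \<and> the (\<Phi> w) z \<noteq> None" unfolding w_def by (rule someI_ex) (use ex in blast)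
  have "consistent (the (\<Phi> w)) (the (\<Phi> u))" using pc w u by (simp add: pc_def)
  then have "the (\<Phi> w) z = the (\<Phi> u) z" using w nz unfolding consistent_def by (metis IntI domIff)
  moreover have "cmb A \<Phi> z = the (\<Phi> w) z" using ex by (simp add: cmb_def w_def)
  ultimately show ?thesis by simp
qed

lemma dom_cmb:
  assumes \<Phi>: "\<Phi> \<in> assignments A (bday_dom SX SY)"
  shows "dom (cmb A \<Phi>) = GA A"
proof (rule set_eqI)
  fix z
  have "\<forall>u\<in>A. (the (\<Phi> u) z \<noteq> None) = (z \<in> vset u)" using AS(3)[OF \<Phi>] by (metis domIff)
  then have iff: "(\<exists>u\<in>A. the (\<Phi> u) z \<noteq> None) \<longleftrightarrow> z \<in> GA A" by (auto simp: GA_def)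
  show "z \<in> dom (cmb A \<Phi>) \<longleftrightarrow> z \<in> GA A"
  proof (cases "\<exists>u\<in>A. the (\<Phi> u) z \<noteq> None")
    case True
    then have "\<exists>u. u \<in> A \<and> the (\<Phi> u) z \<noteq> None" by blast
    then have "(SOME w. w \<in> A \<and> the (\<Phi> w) z \<noteq> None) \<in> A \<and> the (\<Phi> (SOME w. w \<in> A \<and> the (\<Phi> w) z \<noteq> None)) z \<noteq> None"
      by (rule someI_ex)
    then show ?thesis using True iff by (simp add: cmb_def domIff)
  next
    case False then show ?thesis using iff by (simp add: cmb_def domIff)
  qed
qed

lemma cmb_assign:
  assumes \<Phi>: "\<Phi> \<in> assignments A (bday_dom SX SY)" and pc: "pc A \<Phi>"
  shows "cmb A \<Phi> \<in> assignments (GA A) (game_dom SX SY)"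
  unfolding assignments_def
proof (intro CollectI conjI ballI)
  show "dom (cmb A \<Phi>) = GA A" by (rule dom_cmb[OF \<Phi>])
  fix z assume "z \<in> GA A"
  then obtain u where u: "u \<in> A" "z \<in> vset u" by (auto simp: GA_def)
  have "the (\<Phi> u) \<in> assignments (vset u) (game_dom SX SY)" by (rule AS(2)[OF \<Phi> u(1)])
  then show "the (cmb A \<Phi> z) \<in> game_dom SX SY z"
    using cmb_at[OF \<Phi> pc u] u(2) by (auto simp: assignments_def)
qed

lemma vset_props:
  fixes u :: "'x set \<times> 'y set"
  assumes "u \<in> bday_vars l X Y" "finite X" "finite Y"
  shows "vset u \<subseteq> game_vars X Y" "finite (vset u)" "card (vset u) \<le> 2*l"
proof -
  obtain S T where u: "u = (S,T)" "S \<subseteq> X" "card S = l" "T \<subseteq> Y" "card T = l"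
    using assms(1) by (auto simp: bday_vars_def)
  have fS: "finite S" "finite T" using u assms finite_subset by auto
  show "vset u \<subseteq> game_vars X Y" using u by (auto simp: vset_def game_vars_def)
  show "finite (vset u)" using fS u by (simp add: vset_def)
  have "card (vset u) \<le> card (Inl ` S :: ('x+'y) set) + card (Inr ` T :: ('x+'y) set)"
    using u by (simp add: vset_def card_Un_le)
  also have "\<dots> \<le> card S + card T" by (intro add_mono card_image_le fS)
  finally show "card (vset u) \<le> 2*l" using u by simp
qed

lemma GA_props:
  assumes "A \<subseteq> bday_vars l X Y" "finite A" "finite X" "finite Y"
  shows "GA A \<subseteq> game_vars X Y" "finite (GA A)" "card (GA A) \<le> 2*l*card A"
proof -
  show "GA A \<subseteq> game_vars X Y" using vset_props(1) assms by (force simp: GA_def)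
  show "finite (GA A)" using vset_props(2) assms by (force simp: GA_def)
  have "card (GA A) \<le> (\<Sum>u\<in>A. card (vset u))" unfolding GA_def by (rule card_UN_le[OF assms(2)])
  also have "\<dots> \<le> (\<Sum>u\<in>A. 2*l)" by (rule sum_mono) (use vset_props(3) assms in blast)
  finally show "card (GA A) \<le> 2*l*card A" by (simp add: mult.commute)
qed

lemma add_at:
  assumes \<Phi>1: "\<Phi>1 \<in> assignments A1 (bday_dom SX SY)" and \<Phi>2: "\<Phi>2 \<in> assignments A2 (bday_dom SX SY)"
    and c: "consistent \<Phi>1 \<Phi>2"
  shows "u \<in> A1 \<Longrightarrow> (\<Phi>1 ++ \<Phi>2) u = \<Phi>1 u" "u \<in> A2 \<Longrightarrow> (\<Phi>1 ++ \<Phi>2) u = \<Phi>2 u"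
proof -
  have d: "dom \<Phi>1 = A1" "dom \<Phi>2 = A2" using \<Phi>1 \<Phi>2 by (auto simp: assignments_def)
  show "u \<in> A2 \<Longrightarrow> (\<Phi>1 ++ \<Phi>2) u = \<Phi>2 u" using d by (simp add: map_add_dom_app_simps)
  assume u: "u \<in> A1"
  show "(\<Phi>1 ++ \<Phi>2) u = \<Phi>1 u"
  proof (cases "u \<in> A2")
    case True
    then have "\<Phi>1 u = \<Phi>2 u" using c u d unfolding consistent_def by blast
    then show ?thesis using True d by (simp add: map_add_dom_app_simps)
  next
    case False then show ?thesis using d by (simp add: map_add_dom_app_simps)
  qed
qed

lemma glue:
  assumes \<Phi>1: "\<Phi>1 \<in> assignments A1 (bday_dom SX SY)" and \<Phi>2: "\<Phi>2 \<in> assignments A2 (bday_dom SX SY)"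
    and c: "consistent \<Phi>1 \<Phi>2" and p1: "pc A1 \<Phi>1" and p2: "pc A2 \<Phi>2"
    and cc: "consistent (cmb A1 \<Phi>1) (cmb A2 \<Phi>2)"
    and v: "v \<in> A1 \<union> A2" and z: "z \<in> vset v"
  shows "the ((\<Phi>1 ++ \<Phi>2) v) z = (cmb A1 \<Phi>1 ++ cmb A2 \<Phi>2) z"
proof (cases "z \<in> dom (cmb A2 \<Phi>2)")
  case True
  then have r: "(cmb A1 \<Phi>1 ++ cmb A2 \<Phi>2) z = cmb A2 \<Phi>2 z" by (simp add: map_add_dom_app_simps)
  show ?thesis
  proof (cases "v \<in> A2")
    case True
    then show ?thesis using r add_at(2)[OF \<Phi>1 \<Phi>2 c True] cmb_at[OF \<Phi>2 p2 True z] by simp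
  next
    case False
    then have v1: "v \<in> A1" using v by simp
    have "z \<in> dom (cmb A1 \<Phi>1)" using dom_cmb[OF \<Phi>1] v1 z by (auto simp: GA_def)
    then have "cmb A1 \<Phi>1 z = cmb A2 \<Phi>2 z" using cc True unfolding consistent_def by blast
    then show ?thesis using r add_at(1)[OF \<Phi>1 \<Phi>2 c v1] cmb_at[OF \<Phi>1 p1 v1 z] by simp
  qed
next
  case False
  then have r: "(cmb A1 \<Phi>1 ++ cmb A2 \<Phi>2) z = cmb A1 \<Phi>1 z" by (simp add: map_add_dom_app_simps)
  have "v \<notin> A2" using False dom_cmb[OF \<Phi>2] z by (auto simp: GA_def)
  then have v1: "v \<in> A1" using v by simp
  show ?thesis using r add_at(1)[OF \<Phi>1 \<Phi>2 c v1] cmb_at[OF \<Phi>1 p1 v1 z] by simp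
qed

lemma pc_add:
  assumes \<Phi>1: "\<Phi>1 \<in> assignments A1 (bday_dom SX SY)" and \<Phi>2: "\<Phi>2 \<in> assignments A2 (bday_dom SX SY)"
    and c: "consistent \<Phi>1 \<Phi>2"
  shows "pc (A1 \<union> A2) (\<Phi>1 ++ \<Phi>2) \<longleftrightarrow> pc A1 \<Phi>1 \<and> pc A2 \<Phi>2 \<and> consistent (cmb A1 \<Phi>1) (cmb A2 \<Phi>2)"
proof
  let ?\<Phi> = "\<Phi>1 ++ \<Phi>2"
  have \<Phi>: "?\<Phi> \<in> assignments (A1 \<union> A2) (bday_dom SX SY)" using \<Phi>1 \<Phi>2 by (rule add_assign)
  assume p: "pc (A1 \<union> A2) ?\<Phi>"
  have p1: "pc A1 \<Phi>1" using p add_at(1)[OF \<Phi>1 \<Phi>2 c] unfolding pc_def by (metis UnCI)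
  have p2: "pc A2 \<Phi>2" using p add_at(2)[OF \<Phi>1 \<Phi>2 c] unfolding pc_def by (metis UnCI)
  have "consistent (cmb A1 \<Phi>1) (cmb A2 \<Phi>2)"
    unfolding consistent_def
  proof
    fix z assume "z \<in> dom (cmb A1 \<Phi>1) \<inter> dom (cmb A2 \<Phi>2)"
    then obtain u1 u2 where u: "u1 \<in> A1" "z \<in> vset u1" "u2 \<in> A2" "z \<in> vset u2"
      using dom_cmb[OF \<Phi>1] dom_cmb[OF \<Phi>2] by (auto simp: GA_def)
    have e1: "cmb A1 \<Phi>1 z = the (?\<Phi> u1) z" using cmb_at[OF \<Phi>1 p1 u(1,2)] add_at(1)[OF \<Phi>1 \<Phi>2 c u(1)] by simp
    have e2: "cmb A2 \<Phi>2 z = the (?\<Phi> u2) z" using cmb_at[OF \<Phi>2 p2 u(3,4)] add_at(2)[OF \<Phi>1 \<Phi>2 c u(3)] by simp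
    have "consistent (the (?\<Phi> u1)) (the (?\<Phi> u2))" using p u unfolding pc_def by blast
    moreover have "z \<in> dom (the (?\<Phi> u1))" "z \<in> dom (the (?\<Phi> u2))" using AS(3)[OF \<Phi>] u by auto
    ultimately show "cmb A1 \<Phi>1 z = cmb A2 \<Phi>2 z" unfolding e1 e2 consistent_def by blast
  qed
  then show "pc A1 \<Phi>1 \<and> pc A2 \<Phi>2 \<and> consistent (cmb A1 \<Phi>1) (cmb A2 \<Phi>2)" using p1 p2 by blast
next
  let ?\<Phi> = "\<Phi>1 ++ \<Phi>2"
  have \<Phi>: "?\<Phi> \<in> assignments (A1 \<union> A2) (bday_dom SX SY)" using \<Phi>1 \<Phi>2 by (rule add_assign)
  assume a: "pc A1 \<Phi>1 \<and> pc A2 \<Phi>2 \<and> consistent (cmb A1 \<Phi>1) (cmb A2 \<Phi>2)"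
  show "pc (A1 \<union> A2) ?\<Phi>"
    unfolding pc_def consistent_def
  proof (intro ballI)
    fix u w z assume u: "u \<in> A1 \<union> A2" and w: "w \<in> A1 \<union> A2" and z: "z \<in> dom (the (?\<Phi> u)) \<inter> dom (the (?\<Phi> w))"
    have "z \<in> vset u" "z \<in> vset w" using z AS(3)[OF \<Phi> u] AS(3)[OF \<Phi> w] by auto
    then show "the (?\<Phi> u) z = the (?\<Phi> w) z"
      using glue[OF \<Phi>1 \<Phi>2 c _ _ _ u] glue[OF \<Phi>1 \<Phi>2 c _ _ _ w] a by simp
  qed
qed

lemma cmb_add:
  assumes \<Phi>1: "\<Phi>1 \<in> assignments A1 (bday_dom SX SY)" and \<Phi>2: "\<Phi>2 \<in> assignments A2 (bday_dom SX SY)"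
    and c: "consistent \<Phi>1 \<Phi>2" and p: "pc (A1 \<union> A2) (\<Phi>1 ++ \<Phi>2)"
  shows "cmb (A1 \<union> A2) (\<Phi>1 ++ \<Phi>2) = cmb A1 \<Phi>1 ++ cmb A2 \<Phi>2"
proof
  fix z
  have a: "pc A1 \<Phi>1" "pc A2 \<Phi>2" "consistent (cmb A1 \<Phi>1) (cmb A2 \<Phi>2)" using pc_add[OF \<Phi>1 \<Phi>2 c] p by auto
  have \<Phi>: "\<Phi>1 ++ \<Phi>2 \<in> assignments (A1 \<union> A2) (bday_dom SX SY)" using \<Phi>1 \<Phi>2 by (rule add_assign)
  show "cmb (A1 \<union> A2) (\<Phi>1 ++ \<Phi>2) z = (cmb A1 \<Phi>1 ++ cmb A2 \<Phi>2) z"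
  proof (cases "z \<in> GA (A1 \<union> A2)")
    case True
    then obtain v where v: "v \<in> A1 \<union> A2" "z \<in> vset v" by (auto simp: GA_def)
    show ?thesis using cmb_at[OF \<Phi> p v] glue[OF \<Phi>1 \<Phi>2 c a v] by simp
  next
    case False
    then have "z \<notin> dom (cmb (A1 \<union> A2) (\<Phi>1 ++ \<Phi>2))" "z \<notin> dom (cmb A1 \<Phi>1)" "z \<notin> dom (cmb A2 \<Phi>2)"
      using dom_cmb[OF \<Phi>] dom_cmb[OF \<Phi>1] dom_cmb[OF \<Phi>2] by (auto simp: GA_Un)
    then show ?thesis by (simp add: domIff map_add_def)
  qed
qed

lemma cmb_single:
  assumes "\<sigma> \<in> bday_dom SX SY u"
  shows "cmb {u} [u \<mapsto> \<sigma>] = \<sigma>" "pc {u} [u \<mapsto> \<sigma>]" "GA {u} = vset u"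
proof -
  show p: "pc {u} [u \<mapsto> \<sigma>]" by (simp add: pc_def consistent_def)
  show "GA {u} = vset u" by (simp add: GA_def)
  have \<Phi>: "[u \<mapsto> \<sigma>] \<in> assignments {u} (bday_dom SX SY)" using assms by (simp add: assignments_def)
  have ds: "dom \<sigma> = vset u" using assms by (simp add: bday_dom_eq assignments_def)
  show "cmb {u} [u \<mapsto> \<sigma>] = \<sigma>"
  proof
    fix z show "cmb {u} [u \<mapsto> \<sigma>] z = \<sigma> z"
    proof (cases "z \<in> vset u")
      case True then show ?thesis using cmb_at[OF \<Phi> p _ True] by simp
    next
      case False
      then have "z \<notin> dom (cmb {u} [u \<mapsto> \<sigma>])" using dom_cmb[OF \<Phi>] by (simp add: GA_def)
      then show ?thesis using False ds by (metis domIff)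
    qed
  qed
qed

lemma cmb_empty: "cmb {} Map.empty = Map.empty" "pc {} Map.empty" "GA {} = {}"
  by (auto simp: cmb_def pc_def GA_def fun_eq_iff)




locale bc = las r "game_vars X Y" "game_dom SX SY" d U
  for r :: nat and X :: "'x set" and Y :: "'y set" and SX :: "'a set" and SY :: "'b set" and d U +
  fixes l t :: nat
  assumes finX: "finite X" and finY: "finite Y" and lt: "4*l*t \<le> r" and t1: "t \<ge> 1"
begin

abbreviation "BV \<equiv> bday_vars l X Y"
abbreviation "BD \<equiv> bday_dom SX SY"
abbreviation "bidx \<equiv> las_index t BV BD"

lemma r2: "2*l*t \<le> r" "2*l*(2*t) \<le> r" "2*l \<le> r"
proof -
  have "2*l*(2*t) = 4*l*t" by simp
  then show "2*l*(2*t) \<le> r" using lt by simp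
  then show "2*l*t \<le> r" by simp
  have "2*l*1 \<le> 2*l*t" using t1 by (intro mult_le_mono2)
  then show "2*l \<le> r" using \<open>2*l*t \<le> r\<close> by linarith
qed

lemma bidx_iff: "(A,\<Phi>) \<in> bidx \<longleftrightarrow> A \<subseteq> BV \<and> finite A \<and> card A \<le> t \<and> \<Phi> \<in> assignments A BD"
  by (rule idx_iff)

lemma bidx_GA: assumes "(A,\<Phi>) \<in> bidx" "pc A \<Phi>" shows "(GA A, cmb A \<Phi>) \<in> idx"
proof -
  have a: "A \<subseteq> BV" "finite A" "card A \<le> t" "\<Phi> \<in> assignments A BD" using assms by (auto simp: idx_iff)
  have "card (GA A) \<le> 2*l*card A" using GA_props[OF a(1,2) finX finY] by simp
  also have "\<dots> \<le> 2*l*t" using a(3) by simp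
  also have "\<dots> \<le> r" using r2 by simp
  finally show ?thesis using GA_props[OF a(1,2) finX finY] cmb_assign[OF a(4) assms(2)] by (simp add: idx_iff)
qed

lemma W_pair:
  assumes i1: "(A1,\<Phi>1) \<in> bidx" and i2: "(A2,\<Phi>2) \<in> bidx" and c: "consistent \<Phi>1 \<Phi>2"
  shows "ip d (Wv U A1 \<Phi>1) (Wv U A2 \<Phi>2) = (if pc (A1 \<union> A2) (\<Phi>1 ++ \<Phi>2)
     then ip d (U (GA (A1 \<union> A2)) (cmb (A1 \<union> A2) (\<Phi>1 ++ \<Phi>2))) E0 else 0)"
proof -
  have a1: "A1 \<subseteq> BV" "finite A1" "card A1 \<le> t" "\<Phi>1 \<in> assignments A1 BD" using i1 by (auto simp: idx_iff)
  have a2: "A2 \<subseteq> BV" "finite A2" "card A2 \<le> t" "\<Phi>2 \<in> assignments A2 BD" using i2 by (auto simp: idx_iff)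
  show ?thesis
  proof (cases "pc (A1 \<union> A2) (\<Phi>1 ++ \<Phi>2)")
    case True
    then have p: "pc A1 \<Phi>1" "pc A2 \<Phi>2" "consistent (cmb A1 \<Phi>1) (cmb A2 \<Phi>2)"
      using pc_add[OF a1(4) a2(4) c] by auto
    have "card (GA A1 \<union> GA A2) \<le> r"
    proof -
      have "card (GA (A1 \<union> A2)) \<le> 2*l*card (A1 \<union> A2)" using GA_props[of "A1 \<union> A2" l X Y] a1 a2 finX finY by auto
      also have "\<dots> \<le> 2*l*(card A1 + card A2)" by (intro mult_le_mono2 card_Un_le)
      also have "\<dots> \<le> 2*l*(2*t)" using a1(3) a2(3) by (intro mult_le_mono2) linarith
      also have "\<dots> \<le> r" using r2 by simp
      finally show ?thesis by (simp add: GA_Un)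
    qed
    then have "ip d (U (GA A1) (cmb A1 \<Phi>1)) (U (GA A2) (cmb A2 \<Phi>2)) = ip d (U (GA A1 \<union> GA A2) (cmb A1 \<Phi>1 ++ cmb A2 \<Phi>2)) E0"
      using pair[OF bidx_GA[OF i1 p(1)] bidx_GA[OF i2 p(2)] p(3)] by simp
    then show ?thesis using True p cmb_add[OF a1(4) a2(4) c True] by (simp add: Wv_def GA_Un)
  next
    case False
    show ?thesis
    proof (cases "pc A1 \<Phi>1 \<and> pc A2 \<Phi>2")
      case True
      then have "\<not> consistent (cmb A1 \<Phi>1) (cmb A2 \<Phi>2)" using False pc_add[OF a1(4) a2(4) c] by auto
      then have "ip d (U (GA A1) (cmb A1 \<Phi>1)) (U (GA A2) (cmb A2 \<Phi>2)) = 0"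
        using C3 bidx_GA[OF i1] bidx_GA[OF i2] True by auto
      then show ?thesis using True False by (simp add: Wv_def)
    next
      case False2: False
      then show ?thesis using False by (auto simp: Wv_def)
    qed
  qed
qed

lemma W_sol: "lasserre_solution t BV BD d (Wv U)"
  unfolding lasserre_solution_def
proof (intro conjI)
  show "\<forall>(A1,\<Phi>1)\<in>bidx. \<forall>(A2,\<Phi>2)\<in>bidx. 0 \<le> ip d (Wv U A1 \<Phi>1) (Wv U A2 \<Phi>2)"
  proof (clarify)
    fix A1 A2 :: "('x set \<times> 'y set) set" and \<Phi>1 \<Phi>2 :: "('x set \<times> 'y set) \<rightharpoonup> (('x+'y) \<rightharpoonup> ('a+'b))"
    assume i: "(A1,\<Phi>1) \<in> bidx" "(A2,\<Phi>2) \<in> bidx"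
    show "0 \<le> ip d (Wv U A1 \<Phi>1) (Wv U A2 \<Phi>2)"
    proof (cases "pc A1 \<Phi>1 \<and> pc A2 \<Phi>2")
      case True then show ?thesis using C1[OF bidx_GA[OF i(1)] bidx_GA[OF i(2)]] by (simp add: Wv_def)
    next
      case False then show ?thesis by (auto simp: Wv_def)
    qed
  qed
  show "\<forall>(A1,\<Phi>1)\<in>bidx. \<forall>(A2,\<Phi>2)\<in>bidx. \<forall>(A3,\<Phi>3)\<in>bidx. \<forall>(A4,\<Phi>4)\<in>bidx.
         A1 \<union> A2 = A3 \<union> A4 \<and> consistent \<Phi>1 \<Phi>2 \<and> consistent \<Phi>3 \<Phi>4 \<and>
         \<Phi>1 ++ \<Phi>2 = \<Phi>3 ++ \<Phi>4 \<longrightarrow>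
         ip d (Wv U A1 \<Phi>1) (Wv U A2 \<Phi>2) = ip d (Wv U A3 \<Phi>3) (Wv U A4 \<Phi>4)"
  proof (clarify)
    fix A1 A2 A3 A4 :: "('x set \<times> 'y set) set" and \<Phi>1 \<Phi>2 \<Phi>3 \<Phi>4 :: "('x set \<times> 'y set) \<rightharpoonup> (('x+'y) \<rightharpoonup> ('a+'b))"
    assume i: "(A1,\<Phi>1) \<in> bidx" "(A2,\<Phi>2) \<in> bidx" "(A3,\<Phi>3) \<in> bidx" "(A4,\<Phi>4) \<in> bidx"
      and e: "A1 \<union> A2 = A3 \<union> A4" and c: "consistent \<Phi>1 \<Phi>2" "consistent \<Phi>3 \<Phi>4" and e2: "\<Phi>1 ++ \<Phi>2 = \<Phi>3 ++ \<Phi>4"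
    show "ip d (Wv U A1 \<Phi>1) (Wv U A2 \<Phi>2) = ip d (Wv U A3 \<Phi>3) (Wv U A4 \<Phi>4)"
      unfolding W_pair[OF i(1,2) c(1)] W_pair[OF i(3,4) c(2)] e e2 ..
  qed
  show "\<forall>(A1,\<Phi>1)\<in>bidx. \<forall>(A2,\<Phi>2)\<in>bidx.
         \<not> consistent \<Phi>1 \<Phi>2 \<longrightarrow> ip d (Wv U A1 \<Phi>1) (Wv U A2 \<Phi>2) = 0"
  proof (clarify)
    fix A1 A2 :: "('x set \<times> 'y set) set" and \<Phi>1 \<Phi>2 :: "('x set \<times> 'y set) \<rightharpoonup> (('x+'y) \<rightharpoonup> ('a+'b))"
    assume i: "(A1,\<Phi>1) \<in> bidx" "(A2,\<Phi>2) \<in> bidx" and nc: "\<not> consistent \<Phi>1 \<Phi>2"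
    have a1: "\<Phi>1 \<in> assignments A1 BD" using i by (auto simp: idx_iff)
    have a2: "\<Phi>2 \<in> assignments A2 BD" using i by (auto simp: idx_iff)
    show "ip d (Wv U A1 \<Phi>1) (Wv U A2 \<Phi>2) = 0"
    proof (cases "pc A1 \<Phi>1 \<and> pc A2 \<Phi>2")
      case False then show ?thesis by (auto simp: Wv_def)
    next
      case True
      from nc obtain u where u: "u \<in> dom \<Phi>1 \<inter> dom \<Phi>2" "\<Phi>1 u \<noteq> \<Phi>2 u" unfolding consistent_def by blast
      then have uA: "u \<in> A1" "u \<in> A2" using a1 a2 by (auto simp: assignments_def)
      have ne: "the (\<Phi>1 u) \<noteq> the (\<Phi>2 u)" using AS(1)[OF a1 uA(1)] AS(1)[OF a2 uA(2)] u(2) by metis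
      have "\<exists>z\<in>vset u. the (\<Phi>1 u) z \<noteq> the (\<Phi>2 u) z"
      proof (rule ccontr)
        assume "\<not> ?thesis"
        then have "consistent (the (\<Phi>1 u)) (the (\<Phi>2 u))"
          unfolding consistent_def using AS(3)[OF a1 uA(1)] by auto
        then have "the (\<Phi>1 u) = the (\<Phi>2 u)"
          using same_dom_consistent AS(3)[OF a1 uA(1)] AS(3)[OF a2 uA(2)] by metis
        with ne show False ..
      qed
      then obtain z where z: "z \<in> vset u" "the (\<Phi>1 u) z \<noteq> the (\<Phi>2 u) z" by blast
      have "cmb A1 \<Phi>1 z \<noteq> cmb A2 \<Phi>2 z"
        using cmb_at[OF a1 _ uA(1) z(1)] cmb_at[OF a2 _ uA(2) z(1)] True z(2) by simp
      moreover have "z \<in> dom (cmb A1 \<Phi>1)" "z \<in> dom (cmb A2 \<Phi>2)"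
        using dom_cmb[OF a1] dom_cmb[OF a2] uA z(1) by (auto simp: GA_def)
      ultimately have "\<not> consistent (cmb A1 \<Phi>1) (cmb A2 \<Phi>2)" unfolding consistent_def by blast
      then show ?thesis using C3[OF bidx_GA[OF i(1)] bidx_GA[OF i(2)]] True by (simp add: Wv_def)
    qed
  qed
  show "\<forall>x\<in>BV. (\<Sum>\<sigma>\<in>BD x. ip d (Wv U {x} [x \<mapsto> \<sigma>]) (Wv U {x} [x \<mapsto> \<sigma>])) = 1"
  proof
    fix u assume u: "u \<in> BV"
    have "(\<Sum>\<sigma>\<in>BD u. ip d (Wv U {u} [u \<mapsto> \<sigma>]) (Wv U {u} [u \<mapsto> \<sigma>])) = (\<Sum>\<sigma>\<in>BD u. nrm (vset u) \<sigma>)"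
      by (rule sum.cong[OF refl]) (simp add: Wv_def cmb_single)
    also have "\<dots> = 1" unfolding bday_dom_eq
      using vset_props[OF u finX finY] r2 by (intro sum_all) auto
    finally show "(\<Sum>\<sigma>\<in>BD u. ip d (Wv U {u} [u \<mapsto> \<sigma>]) (Wv U {u} [u \<mapsto> \<sigma>])) = 1" .
  qed
  show "ip d (Wv U {} Map.empty) (Wv U {} Map.empty) = 1" using C5 by (simp add: Wv_def cmb_empty)
qed

end



lemma cmb_inj:
  assumes \<Phi>: "\<Phi> \<in> assignments A (bday_dom SX SY)" and \<Psi>: "\<Psi> \<in> assignments A (bday_dom SX SY)"
    and p: "pc A \<Phi>" "pc A \<Psi>" and e: "cmb A \<Phi> = cmb A \<Psi>"
  shows "\<Phi> = \<Psi>"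
proof
  fix u show "\<Phi> u = \<Psi> u"
  proof (cases "u \<in> A")
    case True
    have "consistent (the (\<Phi> u)) (the (\<Psi> u))"
      unfolding consistent_def
    proof
      fix z assume "z \<in> dom (the (\<Phi> u)) \<inter> dom (the (\<Psi> u))"
      then have z: "z \<in> vset u" using AS(3)[OF \<Phi> True] by auto
      show "the (\<Phi> u) z = the (\<Psi> u) z" using cmb_at[OF \<Phi> p(1) True z] cmb_at[OF \<Psi> p(2) True z] e by simp
    qed
    then have "the (\<Phi> u) = the (\<Psi> u)" using same_dom_consistent AS(3)[OF \<Phi> True] AS(3)[OF \<Psi> True] by metis
    then show ?thesis using AS(1)[OF \<Phi> True] AS(1)[OF \<Psi> True] by metis
  next
    case False then show ?thesis using \<Phi> \<Psi> by (auto simp: assignments_def)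
  qed
qed

lemma gp_restrict: "game_pred P q \<psi> = game_pred P q (\<psi> |` game_scope q)"
  by (simp add: game_pred_def game_scope_def restrict_map_def)

lemma finite_BD: "finite SX \<Longrightarrow> finite SY \<Longrightarrow> finite (vset u) \<Longrightarrow> finite (bday_dom SX SY u)"
  unfolding bday_dom_eq by (rule finite_assignments) (auto simp: game_dom_def split: sum.splits)

lemma finite_bday_vars: "finite X \<Longrightarrow> finite Y \<Longrightarrow> finite (bday_vars l X Y)"
  by (rule finite_subset[of _ "Pow X \<times> Pow Y"]) (auto simp: bday_vars_def)

locale bc2 = bc r X Y SX SY d U l t
  for r :: nat and X :: "'x set" and Y :: "'y set" and SX :: "'a set" and SY :: "'b set" and d U l t +
  fixes Q :: "('x \<times> 'y) pmf" and P :: "'x \<Rightarrow> 'y \<Rightarrow> 'a \<Rightarrow> 'b \<Rightarrow> bool" and k :: nat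
  assumes l1: "l \<ge> 1" and QXY: "set_pmf Q \<subseteq> X \<times> Y" and finSX: "finite SX" and finSY: "finite SY"
    and kt: "k \<le> t" and lX: "l \<le> card X" and lY: "l \<le> card Y"
begin

definition viol :: "('x \<times> 'y) \<Rightarrow> real" where
  "viol q = (\<Sum>\<phi>\<in>assignments (game_scope q) (game_dom SX SY). (if game_pred P q \<phi> then 0 else 1) * nrm (game_scope q) \<phi>)"

lemma viol_nonneg: "viol q \<ge> 0"
  unfolding viol_def by (intro sum_nonneg) (simp add: ip_self_nonneg)

lemma finQ: "finite (set_pmf Q)" using QXY finX finY finite_subset by blast

lemma scope_props: assumes "q \<in> set_pmf Q"
  shows "game_scope q \<subseteq> game_vars X Y" "finite (game_scope q)" "card (game_scope q) \<le> r"
proof -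
  show "game_scope q \<subseteq> game_vars X Y" using assms QXY by (auto simp: game_scope_def game_vars_def)
  show "finite (game_scope q)" by (simp add: game_scope_def)
  have "card (game_scope q) \<le> 2" by (simp add: game_scope_def)
  moreover have "2 \<le> r" using r2 l1 by linarith
  ultimately show "card (game_scope q) \<le> r" by linarith
qed

lemma game_value: "las_value (game_dom SX SY) Q game_scope (game_pred P) d U = 1 - (\<Sum>q\<in>set_pmf Q. pmf Q q * viol q)"
proof -
  have inner: "(\<Sum>\<phi>\<in>assignments (game_scope q) (game_dom SX SY). nrm (game_scope q) \<phi> * (if game_pred P q \<phi> then 1 else 0)) = 1 - viol q"
    if q: "q \<in> set_pmf Q" for q
  proof -
    have "(\<Sum>\<phi>\<in>assignments (game_scope q) (game_dom SX SY). nrm (game_scope q) \<phi> * (if game_pred P q \<phi> then 1 else 0)) + viol q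
       = (\<Sum>\<phi>\<in>assignments (game_scope q) (game_dom SX SY). nrm (game_scope q) \<phi>)"
      unfolding viol_def sum.distrib[symmetric] by (intro sum.cong) auto
    also have "\<dots> = 1" using scope_props[OF q] by (intro sum_all) auto
    finally show ?thesis by simp
  qed
  have "las_value (game_dom SX SY) Q game_scope (game_pred P) d U
     = (\<Sum>q\<in>set_pmf Q. (\<Sum>\<phi>\<in>assignments (game_scope q) (game_dom SX SY). nrm (game_scope q) \<phi> * (if game_pred P q \<phi> then 1 else 0)) * pmf Q q)"
    unfolding las_value_def by (rule integral_measure_pmf_real) (use finQ in auto)
  also have "\<dots> = (\<Sum>q\<in>set_pmf Q. (1 - viol q) * pmf Q q)" by (intro sum.cong) (auto simp: inner)
  also have "\<dots> = (\<Sum>q\<in>set_pmf Q. pmf Q q) - (\<Sum>q\<in>set_pmf Q. pmf Q q * viol q)"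
    by (simp add: algebra_simps sum_subtractf)
  also have "(\<Sum>q\<in>set_pmf Q. pmf Q q) = 1" by (rule sum_pmf_eq_1[OF finQ order_refl])
  finally show ?thesis .
qed

sublocale W: las t "bday_vars l X Y" "bday_dom SX SY" d "Wv U"
  by (rule las.intro[OF W_sol])

definition ins :: "('x \<times> 'y) \<Rightarrow> ('x set \<times> 'y set) set \<Rightarrow> bool" where
  "ins q A \<longleftrightarrow> fst q \<in> (\<Union>u\<in>A. fst u) \<and> snd q \<in> (\<Union>u\<in>A. snd u)"

definition gq :: "('x \<times> 'y) \<Rightarrow> ('x set \<times> 'y set) set \<Rightarrow> (('x set \<times> 'y set) \<rightharpoonup> (('x + 'y) \<rightharpoonup> ('a + 'b))) \<Rightarrow> real" where
  "gq q A \<Phi> = (if pc A \<Phi> \<and> ins q A \<and> \<not> game_pred P q (cmb A \<Phi>) then nrm (GA A) (cmb A \<Phi>) else 0)"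

lemma gq_nonneg: "gq q A \<Phi> \<ge> 0" by (simp add: gq_def ip_self_nonneg)

lemma nrmW: "ip d (Wv U A \<Phi>) (Wv U A \<Phi>) = (if pc A \<Phi> then nrm (GA A) (cmb A \<Phi>) else 0)"
  by (simp add: Wv_def)

lemma pointwise:
  assumes vs: "set vs = A"
  shows "ip d (Wv U A \<Phi>) (Wv U A \<Phi>) * (if bday_pred Q P vs \<Phi> then 1 else 0)
     \<ge> ip d (Wv U A \<Phi>) (Wv U A \<Phi>) - (\<Sum>q\<in>set_pmf Q. gq q A \<Phi>)"
proof -
  have S0: "(\<Sum>q\<in>set_pmf Q. gq q A \<Phi>) \<ge> 0" by (intro sum_nonneg gq_nonneg)
  show ?thesis
  proof (cases "pc A \<Phi>")
    case False then show ?thesis using S0 by (simp add: nrmW)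
  next
    case True
    show ?thesis
    proof (cases "bday_pred Q P vs \<Phi>")
      case True then show ?thesis using S0 by simp
    next
      case False
      then obtain x y where q: "(x,y) \<in> set_pmf Q" "ins (x,y) A" "\<not> game_pred P (x,y) (cmb A \<Phi>)"
        using \<open>pc A \<Phi>\<close> vs unfolding bday_pred_def pc_def ins_def combine_eq by auto
      have "gq (x,y) A \<Phi> = nrm (GA A) (cmb A \<Phi>)" using q \<open>pc A \<Phi>\<close> by (simp add: gq_def)
      moreover have "gq (x,y) A \<Phi> \<le> (\<Sum>q\<in>set_pmf Q. gq q A \<Phi>)"
        by (rule member_le_sum) (use q finQ gq_nonneg in auto)
      ultimately show ?thesis using False \<open>pc A \<Phi>\<close> by (simp add: nrmW)
    qed
  qed
qed

lemma sum_gq: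
  assumes A: "A \<subseteq> bday_vars l X Y" "finite A" "card A \<le> t" and q: "q \<in> set_pmf Q"
  shows "(\<Sum>\<Phi>\<in>assignments A (bday_dom SX SY). gq q A \<Phi>) \<le> viol q"
proof (cases "ins q A")
  case False then show ?thesis using viol_nonneg by (simp add: gq_def)
next
  case True
  let ?As = "assignments A (bday_dom SX SY)"
  let ?P = "{\<Phi> \<in> ?As. pc A \<Phi>}"
  let ?G = "assignments (GA A) (game_dom SX SY)"
  define h where "h = (\<lambda>\<psi>. (if game_pred P q \<psi> then 0 else 1) * nrm (GA A) \<psi>)"
  have finAs: "finite ?As" using A(1,2)
    by (intro finite_assignments finite_BD finSX finSY) (blast intro: vset_props(2)[OF _ finX finY])+
  have GAp: "GA A \<subseteq> game_vars X Y" "finite (GA A)" "card (GA A) \<le> 2*l*card A" using GA_props[OF A(1,2) finX finY] by auto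
  have cGA: "card (GA A) \<le> r"
  proof -
    have "2*l*card A \<le> 2*l*t" using A(3) by simp
    then show ?thesis using GAp(3) r2 by linarith
  qed
  have finG: "finite ?G" using GAp by (intro finite_assignments) (auto simp: game_dom_def finSX finSY split: sum.splits)
  have "(\<Sum>\<Phi>\<in>?As. gq q A \<Phi>) = (\<Sum>\<Phi>\<in>?As. if pc A \<Phi> then h (cmb A \<Phi>) else 0)"
    by (intro sum.cong) (auto simp: gq_def h_def True)
  also have "\<dots> = (\<Sum>\<Phi>\<in>?P. h (cmb A \<Phi>))" by (rule sum.inter_filter[OF finAs, symmetric])
  also have "\<dots> = (\<Sum>\<psi>\<in>cmb A ` ?P. h \<psi>)"
  proof -
    have inj: "inj_on (cmb A) ?P" by (rule inj_onI) (use cmb_inj in blast)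
    show ?thesis by (simp add: sum.reindex[OF inj] comp_def)
  qed
  also have "\<dots> \<le> (\<Sum>\<psi>\<in>?G. h \<psi>)"
  proof (rule sum_mono2[OF finG])
    show "cmb A ` ?P \<subseteq> ?G" using cmb_assign by blast
    show "\<And>b. b \<in> ?G - cmb A ` ?P \<Longrightarrow> 0 \<le> h b" by (simp add: h_def ip_self_nonneg)
  qed
  also have "\<dots> = (\<Sum>\<psi>\<in>?G. (\<lambda>\<phi>. if game_pred P q \<phi> then 0 else 1) (\<psi> |` game_scope q) * nrm (GA A) \<psi>)"
    unfolding h_def by (intro sum.cong refl) (simp flip: gp_restrict)
  also have "\<dots> = viol q"
    unfolding viol_def
  proof (rule marg_sum[OF GAp(1,2) cGA])
    show "game_scope q \<subseteq> GA A" using True by (auto simp: ins_def game_scope_def GA_def vset_def)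
  qed
  finally show ?thesis .
qed

lemma inner_b:
  assumes vs: "set vs \<subseteq> bday_vars l X Y" "length vs = k"
  shows "(\<Sum>\<Phi>\<in>assignments (set vs) (bday_dom SX SY). ip d (Wv U (set vs) \<Phi>) (Wv U (set vs) \<Phi>) * (if bday_pred Q P vs \<Phi> then 1 else 0))
     \<ge> 1 - (\<Sum>q\<in>set_pmf Q. viol q)"
proof -
  let ?A = "set vs"
  let ?As = "assignments ?A (bday_dom SX SY)"
  have cA: "card ?A \<le> t" using card_length[of vs] vs kt by linarith
  have "(\<Sum>\<Phi>\<in>?As. ip d (Wv U ?A \<Phi>) (Wv U ?A \<Phi>) * (if bday_pred Q P vs \<Phi> then 1 else 0))
     \<ge> (\<Sum>\<Phi>\<in>?As. ip d (Wv U ?A \<Phi>) (Wv U ?A \<Phi>) - (\<Sum>q\<in>set_pmf Q. gq q ?A \<Phi>))"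
    by (rule sum_mono) (rule pointwise, rule refl)
  moreover have "(\<Sum>\<Phi>\<in>?As. ip d (Wv U ?A \<Phi>) (Wv U ?A \<Phi>) - (\<Sum>q\<in>set_pmf Q. gq q ?A \<Phi>))
      = (\<Sum>\<Phi>\<in>?As. ip d (Wv U ?A \<Phi>) (Wv U ?A \<Phi>)) - (\<Sum>q\<in>set_pmf Q. \<Sum>\<Phi>\<in>?As. gq q ?A \<Phi>)"
    by (simp add: sum_subtractf sum.swap[of _ "set_pmf Q"])
  moreover have "(\<Sum>\<Phi>\<in>?As. ip d (Wv U ?A \<Phi>) (Wv U ?A \<Phi>)) = 1"
    using vs cA by (intro W.sum_all) auto
  moreover have "(\<Sum>q\<in>set_pmf Q. \<Sum>\<Phi>\<in>?As. gq q ?A \<Phi>) \<le> (\<Sum>q\<in>set_pmf Q. viol q)"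
    by (rule sum_mono, rule sum_gq) (use vs cA in auto)
  ultimately show ?thesis by linarith
qed

lemma bdist_set: "set_pmf (bday_dist k l X Y) = {vs. length vs = k \<and> set vs \<subseteq> bday_vars l X Y}"
    "finite (set_pmf (bday_dist k l X Y))"
proof -
  obtain S where S: "S \<subseteq> X" "card S = l" using obtain_subset_with_card_n[OF lX] by metis
  obtain T where T: "T \<subseteq> Y" "card T = l" using obtain_subset_with_card_n[OF lY] by metis
  have "replicate k (S,T) \<in> {vs. length vs = k \<and> set vs \<subseteq> bday_vars l X Y}"
    using S T by (auto simp: bday_vars_def)
  then have ne: "{vs. length vs = k \<and> set vs \<subseteq> bday_vars l X Y} \<noteq> {}" by blast
  have fin: "finite {vs. length vs = k \<and> set vs \<subseteq> bday_vars l X Y}"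
    using finite_lists_length_eq[OF finite_bday_vars[OF finX finY], of l k] by (simp add: conj_commute)
  show "set_pmf (bday_dist k l X Y) = {vs. length vs = k \<and> set vs \<subseteq> bday_vars l X Y}"
    unfolding bday_dist_def using ne fin by simp
  then show "finite (set_pmf (bday_dist k l X Y))" using fin by simp
qed

lemma bday_value:
  "las_value (bday_dom SX SY) (bday_dist k l X Y) bday_scope (bday_pred Q P) d (Wv U) \<ge> 1 - (\<Sum>q\<in>set_pmf Q. viol q)"
  unfolding las_value_def bday_scope_def
  by (rule pmf_exp_ge[OF bdist_set(2)], rule inner_b) (auto simp: bdist_set(1))

end




lemma mk_bc2:
  assumes "lasserre_solution r (game_vars X Y) (game_dom SX SY) d U" "finite X" "finite Y" "4*l*t \<le> r" "t \<ge> 1"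
    "l \<ge> 1" "set_pmf Q \<subseteq> X \<times> Y" "finite SX" "finite SY" "k \<le> t" "l \<le> card X" "l \<le> card Y"
  shows "bc2 r X Y SX SY d U l t Q k"
  using assms by (intro bc2.intro bc.intro las.intro bc_axioms.intro bc2_axioms.intro) auto

theorem corollary4p13:
  "\<exists>c::real. c > 0 \<and>
     (\<forall>(X::'x set) (Y::'y set) (Q::('x \<times> 'y) pmf) (SX::'a set) (SY::'b set)
        (P::'x \<Rightarrow> 'y \<Rightarrow> 'a \<Rightarrow> 'b \<Rightarrow> bool) (k::nat) (l::nat) (r::nat).
        two_prover_game X Y Q SX SY \<and> k \<ge> 2 \<and> l \<ge> 1 \<and>
        k * l \<le> card X \<and> k * l \<le> card Y \<and> r \<ge> k * l \<and>
        opt_las_game r X Y Q SX SY P = 1 \<and>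
        k \<le> nat \<lfloor>c * real r / real l\<rfloor>
        \<longrightarrow> opt_las_bday (nat \<lfloor>c * real r / real l\<rfloor>) k l X Y Q SX SY P = 1)"
proof (intro exI[of _ "1/4"] conjI allI impI)
  show "(0::real) < 1/4" by simp
  fix X :: "'x set" and Y :: "'y set" and Q :: "('x \<times> 'y) pmf" and SX :: "'a set" and SY :: "'b set"
    and P :: "'x \<Rightarrow> 'y \<Rightarrow> 'a \<Rightarrow> 'b \<Rightarrow> bool" and k l r :: nat
  assume H: "two_prover_game X Y Q SX SY \<and> k \<ge> 2 \<and> l \<ge> 1 \<and>
        k * l \<le> card X \<and> k * l \<le> card Y \<and> r \<ge> k * l \<and>
        opt_las_game r X Y Q SX SY P = 1 \<and>
        k \<le> nat \<lfloor>1/4 * real r / real l\<rfloor>"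
  define t where "t = nat \<lfloor>1/4 * real r / real l\<rfloor>"
  have G: "finite X" "finite Y" "X \<noteq> {}" "Y \<noteq> {}" "finite SX" "finite SY" "SX \<noteq> {}" "SY \<noteq> {}" "set_pmf Q \<subseteq> X \<times> Y"
    using H by (auto simp: two_prover_game_def)
  have k2: "k \<ge> 2" and l1: "l \<ge> 1" and kt: "k \<le> t" and opt: "opt_las_game r X Y Q SX SY P = 1"
    using H by (auto simp: t_def)
  have t1: "t \<ge> 1" using k2 kt by simp
  have lX: "l \<le> card X" "l \<le> card Y"
  proof -
    have "l \<le> k * l" using k2 by simp
    then show "l \<le> card X" "l \<le> card Y" using H by linarith+
  qed
  have lt: "4*l*t \<le> r"
  proof -
    let ?x = "1/4 * real r / real l"
    have x0: "?x \<ge> 0" by simp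
    have "real t = real_of_int \<lfloor>?x\<rfloor>" unfolding t_def using x0 by simp
    also have "\<dots> \<le> ?x" by (rule of_int_floor_le)
    finally have "real t \<le> ?x" .
    then have "real t * (4 * real l) \<le> real r" using l1 by (simp add: field_simps)
    then have "real (4*l*t) \<le> real r" by (simp add: algebra_simps)
    then show ?thesis by linarith
  qed
  let ?gv = "game_vars X Y" and ?gd = "game_dom SX SY"
  let ?Sg = "{las_value ?gd Q game_scope (game_pred P) d U | d U. lasserre_solution r ?gv ?gd d U}"
  let ?Sb = "{las_value (bday_dom SX SY) (bday_dist k l X Y) bday_scope (bday_pred Q P) d U | d U.
                lasserre_solution t (bday_vars l X Y) (bday_dom SX SY) d U}"
  have Sg1: "Sup ?Sg = 1" using opt by (simp add: opt_las_game_def opt_las_def)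
  have gdok: "\<And>v. v \<in> ?gv \<Longrightarrow> finite (?gd v) \<and> ?gd v \<noteq> {}"
    using G by (auto simp: game_dom_def split: sum.splits)
  obtain d0 U0 where sol0: "lasserre_solution r ?gv ?gd d0 U0"
    using integral_sol[of ?gv ?gd r, OF gdok] by blast
  have Sgne: "?Sg \<noteq> {}" using sol0 by blast
  interpret B0: bc2 r X Y SX SY d0 U0 l t Q P k
    by (rule mk_bc2) (use sol0 G lt t1 l1 kt lX in auto)
  have ub: "x \<le> 1" if "x \<in> ?Sb" for x
  proof -
    obtain d U where x: "x = las_value (bday_dom SX SY) (bday_dist k l X Y) bday_scope (bday_pred Q P) d U"
      and sol: "lasserre_solution t (bday_vars l X Y) (bday_dom SX SY) d U" using \<open>x \<in> ?Sb\<close> by blast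
    interpret L: las t "bday_vars l X Y" "bday_dom SX SY" d U by (rule las.intro[OF sol])
    show ?thesis unfolding x
    proof (rule L.value_le1[OF B0.bdist_set(2)])
      fix c assume "c \<in> set_pmf (bday_dist k l X Y)"
      then have c: "length c = k" "set c \<subseteq> bday_vars l X Y" using B0.bdist_set(1) by auto
      have "card (set c) \<le> t" using card_length[of c] c kt by linarith
      then show "bday_scope c \<subseteq> bday_vars l X Y \<and> finite (bday_scope c) \<and> card (bday_scope c) \<le> t"
        using c by (simp add: bday_scope_def)
    qed
  qed
  obtain m where m: "m > 0" "\<And>q. q \<in> set_pmf Q \<Longrightarrow> m \<le> pmf Q q"
  proof
    show "Min (pmf Q ` set_pmf Q) > 0"
      using B0.finQ set_pmf_not_empty[of Q] by (auto simp: Min_gr_iff pmf_positive)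
    show "\<And>q. q \<in> set_pmf Q \<Longrightarrow> Min (pmf Q ` set_pmf Q) \<le> pmf Q q"
      using B0.finQ by (auto intro: Min_le)
  qed
  have approx: "\<exists>x\<in>?Sb. 1 - \<epsilon> < x" if e: "\<epsilon> > 0" for \<epsilon>
  proof -
    have "1 - \<epsilon> * m < Sup ?Sg" using Sg1 e m(1) by simp
    then obtain v where "v \<in> ?Sg" "1 - \<epsilon> * m < v" using less_cSupD[OF Sgne] by blast
    then obtain d U where v: "v = las_value ?gd Q game_scope (game_pred P) d U" and sol: "lasserre_solution r ?gv ?gd d U"
      and vgt: "1 - \<epsilon> * m < v" by blast
    interpret B: bc2 r X Y SX SY d U l t Q P k
      by (rule mk_bc2) (use sol G lt t1 l1 kt lX in auto)
    have gv: "v = 1 - (\<Sum>q\<in>set_pmf Q. pmf Q q * B.viol q)" using v B.game_value by simp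
    have "(\<Sum>q\<in>set_pmf Q. m * B.viol q) \<le> (\<Sum>q\<in>set_pmf Q. pmf Q q * B.viol q)"
      by (rule sum_mono) (use m(2) B.viol_nonneg in \<open>auto intro: mult_right_mono\<close>)
    then have "m * (\<Sum>q\<in>set_pmf Q. B.viol q) < \<epsilon> * m" using gv vgt by (simp add: sum_distrib_left)
    then have sv: "(\<Sum>q\<in>set_pmf Q. B.viol q) < \<epsilon>" using m(1) by (simp add: mult.commute)
    have "las_value (bday_dom SX SY) (bday_dist k l X Y) bday_scope (bday_pred Q P) d (Wv U) \<in> ?Sb"
      using B.W_sol by blast
    moreover have "1 - \<epsilon> < las_value (bday_dom SX SY) (bday_dist k l X Y) bday_scope (bday_pred Q P) d (Wv U)"
      using B.bday_value sv by linarith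
    ultimately show ?thesis by blast
  qed
  have Sbne: "?Sb \<noteq> {}" using approx[of 1] by auto
  have bdd: "bdd_above ?Sb" using ub by (intro bdd_aboveI) blast
  have "Sup ?Sb = 1"
  proof (rule antisym)
    show "Sup ?Sb \<le> 1" using ub Sbne by (intro cSup_least) auto
    show "1 \<le> Sup ?Sb"
    proof (rule ccontr)
      assume "\<not> 1 \<le> Sup ?Sb"
      then have "1 - Sup ?Sb > 0" by simp
      from approx[OF this] obtain x where "x \<in> ?Sb" "Sup ?Sb < x" by auto
      with cSup_upper[OF _ bdd] show False by fastforce
    qed
  qed
  then show "opt_las_bday (nat \<lfloor>1/4 * real r / real l\<rfloor>) k l X Y Q SX SY P = 1"
    unfolding t_def[symmetric] opt_las_bday_def opt_las_def .
qed


end
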